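(* Let $X$ be a Banach space, $F$ a Banach lattice, and $T:X\to F$ a bounded linear operator. Then $T$ is limitedly L-weakly compact if and only if for every disjoint norm-bounded sequence $(f_n)$ in the dual $F'$ one has $T'f_n\to 0$ in the weak$^\ast$ topology of $X'$ (i.e. $f_n(Tx)\to 0$ for every $x\in X$).
   Context: All vector spaces are real and operators are linear and bounded; $T'$ denotes the adjoint of $T$. For a subset $A$ of a Banach lattice $F$, $\mathrm{sol}(A)=\bigcup_{a\in A}[-|a|,|a|]$ is its solid hull. A subset $A\subseteq F$ is an Lwc-set if every disjoint sequence in $\mathrm{sol}(A)$ is norm-null. A bounded subset $A$ of a Banach space $X$ is limited if every weak$^\ast$-null sequence $(g_n)$ in $X'$ converges to $0$ uniformly on $A$, i.e. $\sup_{a\in A}|g_n(a)|\to 0$. An operator $T:X\to F$ is limitedly L-weakly compact if $T$ maps every limited subset of $X$ onto an Lwc-subset of $F$. A sequence $(f_n)$ in $F'$ is disjoint if $|f_n|\wedge|f_m|=0$ for $n\ne m$. *)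

theory Defs
  imports "HOL-Analysis.Analysis"
begin

class banach_lattice = banach + lattice + ordered_ab_group_add +
  assumes scaleR_nonneg_bl: "0 \<le> x \<Longrightarrow> 0 \<le> c \<Longrightarrow> 0 \<le> scaleR c x"
  assumes lattice_norm_bl: "sup x (-x) \<le> sup y (-y) \<Longrightarrow> norm x \<le> norm y"

definition lat_abs :: "'b::banach_lattice \<Rightarrow> 'b" where
  "lat_abs x = sup x (-x)"

definition sol :: "'b::banach_lattice set \<Rightarrow> 'b set" where
  "sol A = (\<Union>a\<in>A. {y. lat_abs y \<le> lat_abs a})"

definition disjoint_seq :: "(nat \<Rightarrow> 'b::banach_lattice) \<Rightarrow> bool" where
  "disjoint_seq x \<longleftrightarrow> (\<forall>n m. n \<noteq> m \<longrightarrow> inf (lat_abs (x n)) (lat_abs (x m)) = 0)"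

definition Lwc_set :: "'b::banach_lattice set \<Rightarrow> bool" where
  "Lwc_set A \<longleftrightarrow> (\<forall>x. (\<forall>n. x n \<in> sol A) \<and> disjoint_seq x \<longrightarrow> (\<lambda>n. norm (x n)) \<longlonglongrightarrow> 0)"

definition limited_set :: "'a::banach set \<Rightarrow> bool" where
  "limited_set A \<longleftrightarrow> bounded A \<and>
     (\<forall>g :: nat \<Rightarrow> ('a \<Rightarrow>\<^sub>L real).
        (\<forall>x. (\<lambda>n. blinfun_apply (g n) x) \<longlonglongrightarrow> 0) \<longrightarrow>
        (\<forall>e>0. \<forall>\<^sub>F n in sequentially. \<forall>a\<in>A. \<bar>blinfun_apply (g n) a\<bar> < e))"

definition limitedly_LWC :: "('a::banach \<Rightarrow> 'b::banach_lattice) \<Rightarrow> bool" where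
  "limitedly_LWC T \<longleftrightarrow> (\<forall>A. limited_set A \<longrightarrow> Lwc_set (T ` A))"

text \<open>Order structure of the dual F' (Riesz--Kantorovich formulas):
for x \<ge> 0, |f|(x) = sup {f y : -x \<le> y \<le> x} and
(|f| \<and> |g|)(x) = inf {|f|(y) + |g|(x - y) : 0 \<le> y \<le> x}.
Two functionals are disjoint iff |f| \<and> |g| = 0, i.e. vanishes on the positive cone.\<close>
definition dual_abs :: "('b::banach_lattice \<Rightarrow>\<^sub>L real) \<Rightarrow> 'b \<Rightarrow> real" where
  "dual_abs f x = Sup {blinfun_apply f y | y. - x \<le> y \<and> y \<le> x}"

definition dual_disjoint :: "('b::banach_lattice \<Rightarrow>\<^sub>L real) \<Rightarrow> ('b \<Rightarrow>\<^sub>L real) \<Rightarrow> bool" where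
  "dual_disjoint f g \<longleftrightarrow>
     (\<forall>x. 0 \<le> x \<longrightarrow> Inf {dual_abs f y + dual_abs g (x - y) | y. 0 \<le> y \<and> y \<le> x} = 0)"

end

theory Submission
  imports Defs "HOL-Library.Lattice_Algebras"
begin


context banach_lattice
begin
subclass lattice_ab_group_add ..
end

lemma scaleR_mono_bl:
  fixes x y :: "'b::banach_lattice"
  assumes "0 \<le> c" "x \<le> y" shows "c *\<^sub>R x \<le> c *\<^sub>R y"
proof -
  have "0 \<le> c *\<^sub>R (y - x)" using assms scaleR_nonneg_bl[of "y - x" c] by simp
  thus ?thesis by (simp add: scaleR_diff_right)
qed

lemma scaleR_inf_bl:
  fixes x y :: "'b::banach_lattice"
  assumes "0 \<le> c" shows "c *\<^sub>R inf x y = inf (c *\<^sub>R x) (c *\<^sub>R y)"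
proof (cases "c = 0")
  case True thus ?thesis by simp
next
  case False
  hence c: "c > 0" using assms by simp
  have 1: "c *\<^sub>R inf x y \<le> inf (c *\<^sub>R x) (c *\<^sub>R y)"
    using assms by (intro le_infI scaleR_mono_bl) auto
  have ex: "(1/c) *\<^sub>R (c *\<^sub>R x) = x" and ey: "(1/c) *\<^sub>R (c *\<^sub>R y) = y"
    using c by auto
  have "(1/c) *\<^sub>R inf (c *\<^sub>R x) (c *\<^sub>R y) \<le> inf x y"
  proof (rule le_infI)
    show "(1/c) *\<^sub>R inf (c *\<^sub>R x) (c *\<^sub>R y) \<le> x"
      using scaleR_mono_bl[of "1/c" "inf (c *\<^sub>R x) (c *\<^sub>R y)" "c *\<^sub>R x"] c ex by simp
    show "(1/c) *\<^sub>R inf (c *\<^sub>R x) (c *\<^sub>R y) \<le> y"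
      using scaleR_mono_bl[of "1/c" "inf (c *\<^sub>R x) (c *\<^sub>R y)" "c *\<^sub>R y"] c ey by simp
  qed
  hence "c *\<^sub>R ((1/c) *\<^sub>R inf (c *\<^sub>R x) (c *\<^sub>R y)) \<le> c *\<^sub>R inf x y"
    using c by (intro scaleR_mono_bl) auto
  moreover have "c *\<^sub>R ((1/c) *\<^sub>R inf (c *\<^sub>R x) (c *\<^sub>R y)) = inf (c *\<^sub>R x) (c *\<^sub>R y)"
    using c by simp
  ultimately have "inf (c *\<^sub>R x) (c *\<^sub>R y) \<le> c *\<^sub>R inf x y" by simp
  with 1 show ?thesis by (rule order.antisym)
qed

lemma scaleR_sup_bl:
  fixes x y :: "'b::banach_lattice"
  assumes "0 \<le> c" shows "c *\<^sub>R sup x y = sup (c *\<^sub>R x) (c *\<^sub>R y)"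
proof -
  have e0: "sup x y = - inf (-x) (-y)" unfolding neg_inf_eq_sup by simp
  have e1: "c *\<^sub>R inf (-x) (-y) = inf (c *\<^sub>R (-x)) (c *\<^sub>R (-y))" by (rule scaleR_inf_bl[OF assms])
  have e2: "sup (c *\<^sub>R x) (c *\<^sub>R y) = - inf (- (c *\<^sub>R x)) (- (c *\<^sub>R y))"
    unfolding neg_inf_eq_sup by simp
  show ?thesis unfolding e0 e2 scaleR_minus_right e1 by simp
qed

lemma lat_abs_nonneg: "0 \<le> lat_abs (x::'b::banach_lattice)"
proof -
  have "x + (-x) \<le> lat_abs x + lat_abs x" unfolding lat_abs_def
    by (intro add_mono) auto
  hence "0 \<le> lat_abs x + lat_abs x" by simp
  thus ?thesis by simp
qed

lemma lat_abs_pos: "0 \<le> (x::'b::banach_lattice) \<Longrightarrow> lat_abs x = x"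
proof -
  assume "0 \<le> x"
  hence "-x \<le> x" using order.trans[of "-x" 0 x] by simp
  thus ?thesis unfolding lat_abs_def by (simp add: sup_absorb1)
qed

lemma lat_abs_abs: "lat_abs (lat_abs (x::'b::banach_lattice)) = lat_abs x"
  using lat_abs_pos lat_abs_nonneg by blast

lemma norm_abs_le_bl:
  fixes x y :: "'b::banach_lattice"
  assumes "lat_abs x \<le> lat_abs y" shows "norm x \<le> norm y"
  using assms lattice_norm_bl unfolding lat_abs_def by blast

lemma norm_lat_abs: "norm (lat_abs (x::'b::banach_lattice)) = norm x"
proof -
  have "norm (lat_abs x) \<le> norm x"
    by (rule norm_abs_le_bl) (simp add: lat_abs_abs)
  moreover have "norm x \<le> norm (lat_abs x)"
    by (rule norm_abs_le_bl) (simp add: lat_abs_abs)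
  ultimately show ?thesis by simp
qed

lemma norm_mono_bl:
  fixes x y :: "'b::banach_lattice"
  assumes "0 \<le> x" "x \<le> y" shows "norm x \<le> norm y"
proof -
  have "0 \<le> y" using assms by simp
  hence "lat_abs x \<le> lat_abs y" using assms by (simp add: lat_abs_pos)
  thus ?thesis by (rule norm_abs_le_bl)
qed

lemma pprt_plus_pprt_neg: "pprt (x::'b::banach_lattice) + pprt (-x) = lat_abs x"
proof -
  have "pprt x + pprt (-x) = sup (x + sup (-x) 0) (0 + sup (-x) 0)"
    unfolding pprt_def by (rule add_sup_distrib_right)
  also have "x + sup (-x) 0 = sup (x + -x) (x + 0)" by (rule add_sup_distrib_left)
  also have "sup (sup (x + -x) (x + 0)) (0 + sup (-x) 0) = sup (sup x (-x)) 0"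
    by (simp add: sup_commute sup_left_commute sup_assoc)
  also have "\<dots> = lat_abs x" using lat_abs_nonneg[of x] unfolding lat_abs_def
    by (simp add: sup_absorb1)
  finally show ?thesis .
qed

lemma sup_pprt_pprt_neg: "sup (pprt (x::'b::banach_lattice)) (pprt (-x)) = lat_abs x"
proof -
  have "sup (pprt x) (pprt (-x)) = sup (sup x (-x)) 0" unfolding pprt_def
    by (simp add: sup_commute sup_left_commute sup_assoc)
  also have "\<dots> = lat_abs x" using lat_abs_nonneg[of x] unfolding lat_abs_def
    by (simp add: sup_absorb1)
  finally show ?thesis .
qed

lemma inf_pprt_pprt_neg: "inf (pprt (x::'b::banach_lattice)) (pprt (-x)) = 0"
proof -
  have "pprt x + pprt (-x) = sup (pprt x) (pprt (-x)) + inf (pprt x) (pprt (-x))"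
    by (rule add_eq_inf_sup)
  thus ?thesis using pprt_plus_pprt_neg[of x] sup_pprt_pprt_neg[of x] by simp
qed

lemma disj_pprt_diff: "inf (pprt (a - b)) (pprt (b - (a::'b::banach_lattice))) = 0"
  using inf_pprt_pprt_neg[of "a - b"] by simp

lemma prts_bl: "(x::'b::banach_lattice) = pprt x - pprt (-x)"
proof -
  have "nprt x = - pprt (-x)" unfolding nprt_def pprt_def neg_sup_eq_inf
    by simp
  thus ?thesis using prts[of x] by simp
qed

lemma inf_add_le_bl:
  fixes x y z :: "'b::banach_lattice"
  assumes "0 \<le> x" "0 \<le> y" "0 \<le> z"
  shows "inf (x + y) z \<le> inf x z + inf y z"
proof -
  have e1: "inf x z + inf y z = inf (x + inf y z) (z + inf y z)"
    by (rule add_inf_distrib_right)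
  have e2: "x + inf y z = inf (x + y) (x + z)" by (rule add_inf_distrib_left)
  have e3: "z + inf y z = inf (z + y) (z + z)" by (rule add_inf_distrib_left)
  have "inf (x + y) z \<le> inf (x + y) (x + z)"
    using assms by (intro inf_mono) auto
  moreover have "inf (x + y) z \<le> inf (z + y) (z + z)"
    using assms by (intro le_infI le_infI2) auto
  ultimately show ?thesis unfolding e1 e2 e3 by simp
qed

lemma scaleR_right_mono_bl:
  fixes x :: "'b::banach_lattice"
  assumes "c \<le> d" "0 \<le> x" shows "c *\<^sub>R x \<le> d *\<^sub>R x"
proof -
  have "0 \<le> (d - c) *\<^sub>R x" using assms scaleR_nonneg_bl[of x "d - c"] by simp
  thus ?thesis by (simp add: scaleR_diff_left)
qed

lemma scaleR_nonneg_bl': "0 \<le> (x::'b::banach_lattice) \<Longrightarrow> 0 \<le> c \<Longrightarrow> 0 \<le> c *\<^sub>R x"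
  by (rule scaleR_nonneg_bl)

lemma disj_scale:
  fixes x y :: "'b::banach_lattice"
  assumes "0 \<le> x" "0 \<le> y" "inf x y = 0" "0 \<le> c" "0 \<le> d"
  shows "inf (c *\<^sub>R x) (d *\<^sub>R y) = 0"
proof -
  let ?m = "max c d"
  have "inf (c *\<^sub>R x) (d *\<^sub>R y) \<le> inf (?m *\<^sub>R x) (?m *\<^sub>R y)"
    using assms by (intro inf_mono scaleR_right_mono_bl) auto
  also have "\<dots> = ?m *\<^sub>R inf x y" using assms scaleR_inf_bl[of ?m x y] by simp
  also have "\<dots> = 0" using assms by simp
  finally have "inf (c *\<^sub>R x) (d *\<^sub>R y) \<le> 0" .
  moreover have "0 \<le> inf (c *\<^sub>R x) (d *\<^sub>R y)"
    using assms by (simp add: scaleR_nonneg_bl)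
  ultimately show ?thesis by simp
qed

lemma disj_below:
  fixes x y x' y' :: "'b::banach_lattice"
  assumes "0 \<le> x'" "x' \<le> x" "0 \<le> y'" "y' \<le> y" "inf x y = 0"
  shows "inf x' y' = 0"
proof -
  have "inf x' y' \<le> inf x y" using assms by (intro inf_mono) auto
  moreover have "0 \<le> inf x' y'" using assms by simp
  ultimately show ?thesis using assms by simp
qed

lemma closed_cone:
  fixes X :: "nat \<Rightarrow> 'b::banach_lattice"
  assumes "X \<longlonglongrightarrow> x" "\<And>n. 0 \<le> X n" shows "0 \<le> x"
proof -
  have le: "norm (pprt (-x)) \<le> norm (X n - x)" for n
  proof (rule norm_abs_le_bl)
    have "pprt (-x) \<le> pprt (X n - x)" using assms(2)[of n] by (intro pprt_mono) simp
    also have "\<dots> \<le> lat_abs (X n - x)" unfolding lat_abs_def pprt_def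
      using lat_abs_nonneg[of "X n - x"] unfolding lat_abs_def by simp
    finally have "pprt (-x) \<le> lat_abs (X n - x)" .
    thus "lat_abs (pprt (- x)) \<le> lat_abs (X n - x)"
      by (simp add: lat_abs_pos lat_abs_abs)
  qed
  have "(\<lambda>n. norm (X n - x)) \<longlonglongrightarrow> 0"
    using assms(1) by (simp add: LIM_zero tendsto_norm_zero)
  hence "norm (pprt (-x)) \<le> 0"
    by (rule LIMSEQ_le_const) (use le in auto)
  hence "norm (pprt (-x)) = 0" using norm_ge_zero[of "pprt (-x)"] by linarith
  hence "pprt (-x) = 0" by simp
  hence "-x \<le> 0" using le_zero_iff_zero_pprt[of "-x"] by simp
  thus ?thesis by simp
qed

lemma closed_cone_le:
  fixes X :: "nat \<Rightarrow> 'b::banach_lattice"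
  assumes "X \<longlonglongrightarrow> x" "\<And>n. a \<le> X n" shows "a \<le> x"
proof -
  have "(\<lambda>n. X n - a) \<longlonglongrightarrow> x - a" using assms(1) by (intro tendsto_intros)
  hence "0 \<le> x - a" by (rule closed_cone) (use assms(2) in simp)
  thus ?thesis by simp
qed

lemma closed_cone_ge:
  fixes X :: "nat \<Rightarrow> 'b::banach_lattice"
  assumes "X \<longlonglongrightarrow> x" "\<And>n. X n \<le> a" shows "x \<le> a"
proof -
  have "(\<lambda>n. a - X n) \<longlonglongrightarrow> a - x" using assms(1) by (intro tendsto_intros)
  hence "0 \<le> a - x" by (rule closed_cone) (use assms(2) in simp)
  thus ?thesis by simp
qed

lemma norm_add_le_pos:
  fixes a b c :: "'b::banach_lattice"
  assumes "0 \<le> a" "a \<le> b + c" shows "norm a \<le> norm b + norm c"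
  using norm_mono_bl[OF assms] norm_triangle_ineq[of b c] by linarith


lemma interval_norm:
  fixes x y :: "'b::banach_lattice"
  assumes "- x \<le> y" "y \<le> x" shows "norm y \<le> norm x" "0 \<le> x"
proof -
  have "lat_abs y \<le> x" unfolding lat_abs_def using assms by (simp add: minus_le_iff)
  moreover have "0 \<le> x" using order.trans[OF lat_abs_nonneg[of y] \<open>lat_abs y \<le> x\<close>] .
  ultimately show "norm y \<le> norm x" using norm_abs_le_bl[of y x] lat_abs_pos[of x] by simp
  show "0 \<le> x" by fact
qed

lemma da_bdd:
  fixes f :: "'b::banach_lattice \<Rightarrow>\<^sub>L real"
  shows "bdd_above {blinfun_apply f y | y. - x \<le> y \<and> y \<le> x}"
proof (rule bdd_aboveI[where M = "norm f * norm x"])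
  fix r assume "r \<in> {blinfun_apply f y | y. - x \<le> y \<and> y \<le> x}"
  then obtain y where r: "r = f y" "- x \<le> y" "y \<le> x" by auto
  have "r \<le> norm f * norm y" using r(1) norm_blinfun[of f y] by simp
  also have "\<dots> \<le> norm f * norm x" using interval_norm[OF r(2,3)] by (simp add: mult_left_mono)
  finally show "r \<le> norm f * norm x" .
qed

lemma da_ge:
  fixes f :: "'b::banach_lattice \<Rightarrow>\<^sub>L real"
  assumes "- x \<le> y" "y \<le> x" shows "f y \<le> dual_abs f x"
  unfolding dual_abs_def by (rule cSup_upper) (use assms da_bdd in auto)

lemma da_nonneg:
  fixes f :: "'b::banach_lattice \<Rightarrow>\<^sub>L real"
  assumes "0 \<le> x" shows "0 \<le> dual_abs f x"
  using da_ge[of x 0 f] assms by simp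

lemma da_le_norm:
  fixes f :: "'b::banach_lattice \<Rightarrow>\<^sub>L real"
  assumes "0 \<le> x" shows "dual_abs f x \<le> norm f * norm x"
  unfolding dual_abs_def
proof (rule cSup_least)
  show "{blinfun_apply f y |y. - x \<le> y \<and> y \<le> x} \<noteq> {}" using assms by (auto intro!: exI[of _ 0])
  fix r assume "r \<in> {blinfun_apply f y | y. - x \<le> y \<and> y \<le> x}"
  then obtain y where r: "r = f y" "- x \<le> y" "y \<le> x" by auto
  have "r \<le> norm f * norm y" using r(1) norm_blinfun[of f y] by simp
  also have "\<dots> \<le> norm f * norm x" using interval_norm[OF r(2,3)] by (simp add: mult_left_mono)
  finally show "r \<le> norm f * norm x" .
qed

lemma da_abs:
  fixes f :: "'b::banach_lattice \<Rightarrow>\<^sub>L real"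
  shows "\<bar>f y\<bar> \<le> dual_abs f (lat_abs y)"
proof -
  have a: "- lat_abs y \<le> y" "y \<le> lat_abs y" "- lat_abs y \<le> - y" "- y \<le> lat_abs y"
    unfolding lat_abs_def by (auto simp: minus_le_iff)
  have "f y \<le> dual_abs f (lat_abs y)" using da_ge[OF a(1,2)] .
  moreover have "f (-y) \<le> dual_abs f (lat_abs y)" using da_ge[OF a(3,4)] .
  ultimately show ?thesis by (simp add: blinfun.minus_right)
qed

lemma da_mono:
  fixes f :: "'b::banach_lattice \<Rightarrow>\<^sub>L real"
  assumes "0 \<le> x" "x \<le> x'" shows "dual_abs f x \<le> dual_abs f x'"
  unfolding dual_abs_def[of f x]
proof (rule cSup_least)
  show "{blinfun_apply f y |y. - x \<le> y \<and> y \<le> x} \<noteq> {}" using assms by (auto intro!: exI[of _ 0])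
  fix r assume "r \<in> {blinfun_apply f y | y. - x \<le> y \<and> y \<le> x}"
  then obtain y where r: "r = f y" "- x \<le> y" "y \<le> x" by auto
  have "- x' \<le> y" using r(2) assms(2) by (meson neg_le_iff_le order.trans)
  moreover have "y \<le> x'" using r(3) assms(2) by simp
  ultimately show "r \<le> dual_abs f x'" using da_ge r(1) by simp
qed

lemma da_subadd:
  fixes f :: "'b::banach_lattice \<Rightarrow>\<^sub>L real"
  assumes "0 \<le> x" "0 \<le> x'" shows "dual_abs f (x + x') \<le> dual_abs f x + dual_abs f x'"
  unfolding dual_abs_def[of f "x + x'"]
proof (rule cSup_least)
  have "- x \<le> x'" using assms by (meson neg_le_0_iff_le order.trans)
  thus "{blinfun_apply f y |y. - (x + x') \<le> y \<and> y \<le> x + x'} \<noteq> {}" using assms by (auto intro!: exI[of _ 0])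
  fix r assume "r \<in> {blinfun_apply f y | y. - (x + x') \<le> y \<and> y \<le> x + x'}"
  then obtain w where r: "r = f w" "- (x + x') \<le> w" "w \<le> x + x'" by auto
  define w1 where "w1 = inf (sup w (-x)) x"
  define w2 where "w2 = w - w1"
  have "- x \<le> x" using assms by (meson neg_le_0_iff_le order.trans)
  have w1a: "- x \<le> w1" unfolding w1_def using \<open>- x \<le> x\<close> by (simp add: le_infI)
  have w1b: "w1 \<le> x" unfolding w1_def by simp
  have "w \<le> x' + w1"
  proof -
    have "x' + w1 = inf (sup (x' + w) (x' + -x)) (x' + x)"
      unfolding w1_def by (simp add: add_inf_distrib_left add_sup_distrib_left)
    moreover have "w \<le> sup (x' + w) (x' + -x)" using assms by (simp add: le_supI1)
    moreover have "w \<le> x' + x" using r(3) by (simp add: add.commute)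
    ultimately show ?thesis by simp
  qed
  hence w2b: "w2 \<le> x'" unfolding w2_def by (simp add: algebra_simps)
  have "w1 \<le> w + x'"
  proof -
    have "w1 \<le> sup w (-x)" unfolding w1_def by simp
    moreover have "sup w (-x) \<le> w + x'"
      using assms r(2) by (auto simp: algebra_simps intro: le_supI)
    ultimately show ?thesis by (rule order.trans)
  qed
  hence w2a: "- x' \<le> w2" unfolding w2_def by (simp add: algebra_simps)
  have "r = f w1 + f w2" unfolding r(1) w2_def by (simp add: blinfun.diff_right)
  also have "\<dots> \<le> dual_abs f x + dual_abs f x'"
    using da_ge[OF w1a w1b, of f] da_ge[OF w2a w2b, of f] by simp
  finally show "r \<le> dual_abs f x + dual_abs f x'" .
qed

lemma da_cont:
  fixes f :: "'b::banach_lattice \<Rightarrow>\<^sub>L real"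
  assumes "0 \<le> x" "0 \<le> y" shows "dual_abs f x \<le> dual_abs f y + norm f * norm (x - y)"
proof -
  have "x - y \<le> lat_abs (x - y)" unfolding lat_abs_def by simp
  hence "x \<le> y + lat_abs (x - y)" by (simp add: algebra_simps)
  hence "dual_abs f x \<le> dual_abs f (y + lat_abs (x - y))" using assms by (intro da_mono) auto
  also have "\<dots> \<le> dual_abs f y + dual_abs f (lat_abs (x - y))"
    using assms lat_abs_nonneg by (intro da_subadd) auto
  also have "dual_abs f (lat_abs (x - y)) \<le> norm f * norm (x - y)"
    using da_le_norm[OF lat_abs_nonneg, of f "x - y"] norm_lat_abs[of "x - y"] by simp
  finally show ?thesis by simp
qed

lemma da_sum:
  fixes f :: "'b::banach_lattice \<Rightarrow>\<^sub>L real"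
  assumes "finite I" "\<And>i. i \<in> I \<Longrightarrow> 0 \<le> x i"
  shows "dual_abs f (\<Sum>i\<in>I. x i) \<le> (\<Sum>i\<in>I. dual_abs f (x i))"
  using assms
proof (induction I rule: finite_induct)
  case empty
  have "dual_abs f 0 \<le> norm f * norm (0::'b)" by (rule da_le_norm) simp
  thus ?case by simp
next
  case (insert a I)
  have "dual_abs f (\<Sum>i\<in>insert a I. x i) = dual_abs f (x a + (\<Sum>i\<in>I. x i))"
    using insert by simp
  also have "\<dots> \<le> dual_abs f (x a) + dual_abs f (\<Sum>i\<in>I. x i)"
    using insert by (intro da_subadd sum_nonneg) auto
  also have "\<dots> \<le> dual_abs f (x a) + (\<Sum>i\<in>I. dual_abs f (x i))"
    using insert by simp
  finally show ?case using insert by simp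
qed

lemma dd_split:
  fixes f g :: "'b::banach_lattice \<Rightarrow>\<^sub>L real"
  assumes "dual_disjoint f g" "0 \<le> x" "0 < d"
  shows "\<exists>y. 0 \<le> y \<and> y \<le> x \<and> dual_abs f y + dual_abs g (x - y) < d"
proof -
  let ?S = "{dual_abs f y + dual_abs g (x - y) | y. 0 \<le> y \<and> y \<le> x}"
  have "Inf ?S = 0" using assms(1,2) unfolding dual_disjoint_def by blast
  moreover have "?S \<noteq> {}" using assms(2) by auto
  ultimately obtain r where "r \<in> ?S" "r < d" using cInf_lessD[of ?S d] assms(3) by auto
  thus ?thesis by auto
qed


definition ocu :: "'b::banach_lattice \<Rightarrow> bool" where
  "ocu u \<longleftrightarrow> (\<forall>e. (\<forall>n. 0 \<le> e n \<and> e n \<le> u) \<and> (\<forall>n m. n \<noteq> m \<longrightarrow> inf (e n) (e m) = 0)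
      \<longrightarrow> (\<lambda>n. norm (e n)) \<longlonglongrightarrow> 0)"

lemma ocu_D:
  fixes e :: "nat \<Rightarrow> 'b::banach_lattice"
  assumes "ocu u" "\<And>n. 0 \<le> e n" "\<And>n. e n \<le> u" "\<And>n m. n \<noteq> m \<Longrightarrow> inf (e n) (e m) = 0"
  shows "(\<lambda>n. norm (e n)) \<longlonglongrightarrow> 0"
  using assms unfolding ocu_def by blast

lemma ocu_contra:
  fixes e :: "nat \<Rightarrow> 'b::banach_lattice"
  assumes "ocu u" "\<And>n. 0 \<le> e n" "\<And>n. e n \<le> u" "\<And>n m. n \<noteq> m \<Longrightarrow> inf (e n) (e m) = 0"
    "0 < c" "\<And>n. c \<le> norm (e n)"
  shows False
proof -
  have "(\<lambda>n. norm (e n)) \<longlonglongrightarrow> 0" using ocu_D assms by blast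
  hence "eventually (\<lambda>n. norm (e n) < c) sequentially"
    using assms(5) by (rule order_tendstoD(2))
  then obtain N where "\<forall>n\<ge>N. norm (e n) < c" unfolding eventually_sequentially by blast
  hence "norm (e N) < c" by simp
  thus False using assms(6)[of N] by simp
qed

lemma closed_cone_le_ev:
  fixes X :: "nat \<Rightarrow> 'b::banach_lattice"
  assumes "X \<longlonglongrightarrow> x" "\<And>n. n \<ge> N \<Longrightarrow> a \<le> X n" shows "a \<le> x"
proof -
  have "(\<lambda>n. X (n + N)) \<longlonglongrightarrow> x" using assms(1) by (rule LIMSEQ_ignore_initial_segment)
  thus ?thesis by (rule closed_cone_le) (use assms(2) in simp)
qed

lemma suminf_ge_term:
  fixes f :: "nat \<Rightarrow> 'b::banach_lattice"
  assumes "summable f" "\<And>n. 0 \<le> f n"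
  shows "f j \<le> suminf f" "0 \<le> suminf f"
proof -
  have L: "(\<lambda>n. \<Sum>i<n. f i) \<longlonglongrightarrow> suminf f" using assms(1) by (rule summable_LIMSEQ)
  have "f j \<le> (\<Sum>i<n. f i)" if "n \<ge> Suc j" for n
  proof -
    have "f j = (\<Sum>i\<in>{j}. f i)" by simp
    also have "\<dots> \<le> (\<Sum>i<n. f i)" using that assms(2) by (intro sum_mono2) auto
    finally show ?thesis .
  qed
  thus "f j \<le> suminf f" using closed_cone_le_ev[OF L] by blast
  have "0 \<le> (\<Sum>i<n. f i)" for n using assms(2) by (intro sum_nonneg) auto
  thus "0 \<le> suminf f" using closed_cone_le[OF L] by blast
qed

lemma diff_inf_pprt: "(a::'b::banach_lattice) - inf a b = pprt (a - b)"
proof -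
  have "a - inf a b = a + sup (-a) (-b)" by (rule diff_inf_eq_sup)
  also have "\<dots> = sup (a + -a) (a + -b)" by (rule add_sup_distrib_left)
  also have "\<dots> = pprt (a - b)" unfolding pprt_def by (simp add: sup_commute)
  finally show ?thesis .
qed

lemma core_disj:
  fixes h :: "nat \<Rightarrow> 'b::banach_lattice"
  assumes ocu: "ocu u" and h0: "\<And>k. 0 \<le> h k" and hu: "\<And>k. h k \<le> u"
    and hc: "\<And>k. c \<le> norm (h k)" and c: "0 < c"
    and lim: "\<And>j. (\<lambda>l. norm (inf (h j) (h l))) \<longlonglongrightarrow> 0"
  shows False
proof -
  define \<eta> where "\<eta> = c / 4"
  have eta: "\<eta> > 0" using c by (simp add: \<eta>_def)
  define B where "B = (\<lambda>j::nat. \<eta> * (1/2) ^ j)"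
  have Bpos: "B j > 0" for j using eta by (simp add: B_def)
  have ex: "\<exists>l. s < l \<and> (\<forall>k\<le>s. norm (inf (h k) (h l)) \<le> B (Suc j))" for s j
  proof -
    have "\<forall>k\<in>{..s}. eventually (\<lambda>l. norm (inf (h k) (h l)) < B (Suc j)) sequentially"
      using lim Bpos by (auto simp: order_tendsto_iff)
    hence "eventually (\<lambda>l. \<forall>k\<in>{..s}. norm (inf (h k) (h l)) < B (Suc j)) sequentially"
      by (intro eventually_ball_finite) auto
    moreover have "eventually (\<lambda>l. s < l) sequentially" by (rule eventually_gt_at_top)
    ultimately have "eventually (\<lambda>l. s < l \<and> (\<forall>k\<in>{..s}. norm (inf (h k) (h l)) < B (Suc j))) sequentially"
      by (simp add: eventually_conj_iff)
    then obtain N where "\<forall>l\<ge>N. s < l \<and> (\<forall>k\<in>{..s}. norm (inf (h k) (h l)) < B (Suc j))"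
      unfolding eventually_sequentially by blast
    hence "s < N \<and> (\<forall>k\<in>{..s}. norm (inf (h k) (h N)) < B (Suc j))" by blast
    then obtain l where "s < l \<and> (\<forall>k\<in>{..s}. norm (inf (h k) (h l)) < B (Suc j))" by blast
    thus ?thesis by (auto intro!: exI[of _ l] less_imp_le)
  qed
  define \<sigma> where "\<sigma> = rec_nat 0 (\<lambda>j s. SOME l. s < l \<and> (\<forall>k\<le>s. norm (inf (h k) (h l)) \<le> B (Suc j)))"
  have \<sigma>0: "\<sigma> 0 = 0" by (simp add: \<sigma>_def)
  have \<sigma>S: "\<sigma> (Suc j) = (SOME l. \<sigma> j < l \<and> (\<forall>k\<le>\<sigma> j. norm (inf (h k) (h l)) \<le> B (Suc j)))" for j
    by (simp add: \<sigma>_def)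
  have \<sigma>P: "\<sigma> j < \<sigma> (Suc j) \<and> (\<forall>k\<le>\<sigma> j. norm (inf (h k) (h (\<sigma> (Suc j)))) \<le> B (Suc j))" for j
    unfolding \<sigma>S by (rule someI_ex) (rule ex)
  have sm: "strict_mono \<sigma>" using \<sigma>P by (simp add: strict_mono_Suc_iff)
  define k where "k = (\<lambda>i. h (\<sigma> i))"
  have kbound: "norm (inf (k i) (k j)) \<le> B j" if "i \<noteq> j" for i j
  proof (cases "i < j")
    case True
    then obtain j' where j': "j = Suc j'" by (cases j) auto
    have "\<sigma> i \<le> \<sigma> j'" using True j' sm by (simp add: strict_mono_less_eq)
    thus ?thesis using \<sigma>P[of j'] j' unfolding k_def by auto
  next
    case False
    hence ji: "j < i" using that by simp
    then obtain i' where i': "i = Suc i'" by (cases i) auto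
    have "\<sigma> j \<le> \<sigma> i'" using ji i' sm by (simp add: strict_mono_less_eq)
    hence "norm (inf (k j) (k i)) \<le> B i" using \<sigma>P[of i'] i' unfolding k_def by auto
    moreover have "B i \<le> B j" unfolding B_def using ji eta
      by (intro mult_left_mono power_decreasing) auto
    ultimately show ?thesis by (simp add: inf_commute)
  qed
  define F where "F = (\<lambda>i j. if j = i then 0 else inf (k i) (k j))"
  have F0: "0 \<le> F i j" for i j unfolding F_def k_def using h0 by simp
  have Fb: "norm (F i j) \<le> B j" for i j
    unfolding F_def using kbound Bpos[of j] by auto
  have sB: "summable B" unfolding B_def by (intro summable_mult) simp
  have suB: "suminf B = 2 * \<eta>"
  proof -
    have "suminf (\<lambda>j. (1/2::real) ^ j) = 2" using suminf_geometric[of "1/2::real"] by simp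
    thus ?thesis unfolding B_def using suminf_mult[of "\<lambda>j. (1/2::real) ^ j" \<eta>] by simp
  qed
  have sF: "summable (F i)" for i
    by (rule summable_comparison_test'[OF sB]) (use Fb in auto)
  define S where "S = (\<lambda>i. suminf (F i))"
  have S0: "0 \<le> S i" for i unfolding S_def using suminf_ge_term(2)[OF sF F0] .
  have Sge: "inf (k i) (k j) \<le> S i" if "i \<noteq> j" for i j
    using suminf_ge_term(1)[OF sF F0, of i j] that unfolding S_def F_def by simp
  have Sn: "norm (S i) \<le> 2 * \<eta>" for i
    unfolding S_def using norm_suminf_le[OF Fb sB] suB by simp
  define e where "e = (\<lambda>i. pprt (k i - S i))"
  have e0: "0 \<le> e i" for i unfolding e_def by simp
  have eu: "e i \<le> u" for i
  proof -
    have "e i \<le> pprt (k i)" unfolding e_def using S0[of i] by (intro pprt_mono) simp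
    also have "\<dots> = k i" using h0 unfolding k_def by simp
    finally show ?thesis using hu unfolding k_def by (rule order.trans)
  qed
  have ed: "inf (e i) (e j) = 0" if "i \<noteq> j" for i j
  proof (rule disj_below)
    show "0 \<le> e i" "0 \<le> e j" by (rule e0)+
    have "e i \<le> pprt (k i - inf (k i) (k j))" unfolding e_def using Sge[OF that] by (intro pprt_mono diff_left_mono)
    also have "\<dots> = pprt (pprt (k i - k j))" by (simp only: diff_inf_pprt)
    also have "\<dots> = pprt (k i - k j)" by simp
    finally show "e i \<le> pprt (k i - k j)" .
    have "e j \<le> pprt (k j - inf (k j) (k i))" unfolding e_def using Sge[of j i] that by (intro pprt_mono diff_left_mono) auto
    also have "\<dots> = pprt (pprt (k j - k i))" by (simp only: diff_inf_pprt)
    also have "\<dots> = pprt (k j - k i)" by simp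
    finally show "e j \<le> pprt (k j - k i)" .
    show "inf (pprt (k i - k j)) (pprt (k j - k i)) = 0" by (rule disj_pprt_diff)
  qed
  have en: "c / 2 \<le> norm (e i)" for i
  proof -
    have "k i - S i \<le> e i" unfolding e_def pprt_def by simp
    hence "k i \<le> e i + S i" by (simp add: algebra_simps)
    hence "norm (k i) \<le> norm (e i) + norm (S i)" using h0 unfolding k_def by (intro norm_add_le_pos) auto
    moreover have "c \<le> norm (k i)" unfolding k_def by (rule hc)
    ultimately show ?thesis using Sn[of i] unfolding \<eta>_def by simp
  qed
  show False by (rule ocu_contra[OF ocu e0 eu ed _ en]) (use c in auto)
qed


definition mult_le :: "nat \<Rightarrow> (nat \<Rightarrow> 'b::banach_lattice) \<Rightarrow> bool" where
  "mult_le N h \<longleftrightarrow> (\<forall>I. card I = Suc N \<longrightarrow> (\<forall>z. 0 \<le> z \<and> (\<forall>i\<in>I. z \<le> h i) \<longrightarrow> z = 0))"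

lemma mult_ind:
  fixes u :: "'b::banach_lattice"
  assumes ocu: "ocu u"
  shows "\<forall>h c. 0 < c \<and> (\<forall>k. 0 \<le> h k \<and> h k \<le> u \<and> c \<le> norm (h k)) \<and> mult_le N h \<longrightarrow> False"
proof (induction N)
  case 0
  show ?case
  proof (intro allI impI)
    fix h :: "nat \<Rightarrow> 'b" and c :: real
    assume a: "0 < c \<and> (\<forall>k. 0 \<le> h k \<and> h k \<le> u \<and> c \<le> norm (h k)) \<and> mult_le 0 h"
    have "card {0::nat} = Suc 0" by simp
    hence "h 0 = 0" using a unfolding mult_le_def by blast
    moreover have "c \<le> norm (h 0)" using a by blast
    ultimately show False using a by simp
  qed
next
  case (Suc N)
  show ?case
  proof (intro allI impI)
    fix h :: "nat \<Rightarrow> 'b" and c :: real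
    assume a: "0 < c \<and> (\<forall>k. 0 \<le> h k \<and> h k \<le> u \<and> c \<le> norm (h k)) \<and> mult_le (Suc N) h"
    show False
    proof (cases "\<forall>j. (\<lambda>l. norm (inf (h j) (h l))) \<longlonglongrightarrow> 0")
      case True
      show False by (rule core_disj[OF ocu, of h c]) (use a True in auto)
    next
      case False
      then obtain j where nj: "\<not> (\<lambda>l. norm (inf (h j) (h l))) \<longlonglongrightarrow> 0" by blast
      have "\<exists>r>0. \<forall>no. \<exists>n\<ge>no. r \<le> norm (inf (h j) (h n))"
      proof (rule ccontr)
        assume "\<not> ?thesis"
        hence "\<forall>r>0. \<exists>no. \<forall>n\<ge>no. norm (inf (h j) (h n)) < r" by (meson not_le)
        hence "(\<lambda>l. norm (inf (h j) (h l))) \<longlonglongrightarrow> 0" by (simp add: LIMSEQ_iff)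
        with nj show False by simp
      qed
      then obtain r where r: "r > 0" "\<And>no. \<exists>n\<ge>no. r \<le> norm (inf (h j) (h n))" by blast
      define L where "L = {l. l \<noteq> j \<and> r \<le> norm (inf (h j) (h l))}"
      have infL: "infinite L" unfolding infinite_nat_iff_unbounded_le
      proof
        fix m
        obtain n where "n \<ge> max m (Suc j)" "r \<le> norm (inf (h j) (h n))" using r(2) by blast
        thus "\<exists>n\<ge>m. n \<in> L" unfolding L_def by (intro exI[of _ n]) auto
      qed
      define \<sigma> where "\<sigma> = enumerate L"
      have \<sigma>L: "\<sigma> i \<in> L" for i unfolding \<sigma>_def using infL by (rule enumerate_in_set)
      have \<sigma>inj: "inj \<sigma>" unfolding \<sigma>_def using infL
        by (intro strict_mono_imp_inj_on) (simp add: strict_mono_def enumerate_mono)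
      define w where "w = (\<lambda>i. inf (h j) (h (\<sigma> i)))"
      have "mult_le N w" unfolding mult_le_def
      proof (intro allI impI)
        fix I :: "nat set" and z assume I: "card I = Suc N" and z: "0 \<le> z \<and> (\<forall>i\<in>I. z \<le> w i)"
        have fI: "finite I" using I by (simp add: card_ge_0_finite)
        have "j \<notin> \<sigma> ` I" using \<sigma>L unfolding L_def by auto
        hence "card (insert j (\<sigma> ` I)) = Suc (card (\<sigma> ` I))" using fI by simp
        also have "card (\<sigma> ` I) = card I" using \<sigma>inj by (simp add: card_image inj_on_subset)
        finally have "card (insert j (\<sigma> ` I)) = Suc (Suc N)" using I by simp
        moreover have "I \<noteq> {}" using I by auto
        moreover have "\<forall>i\<in>insert j (\<sigma> ` I). z \<le> h i"
          using z \<open>I \<noteq> {}\<close> unfolding w_def by auto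
        ultimately show "z = 0" using a z unfolding mult_le_def by blast
      qed
      moreover have "\<forall>k. 0 \<le> w k \<and> w k \<le> u \<and> r \<le> norm (w k)"
      proof
        fix k
        have "0 \<le> w k" unfolding w_def using a by simp
        moreover have "w k \<le> u" unfolding w_def using a by (meson inf.coboundedI1)
        moreover have "r \<le> norm (w k)" unfolding w_def using \<sigma>L[of k] unfolding L_def by simp
        ultimately show "0 \<le> w k \<and> w k \<le> u \<and> r \<le> norm (w k)" by simp
      qed
      ultimately show False using Suc.IH r(1) by blast
    qed
  qed
qed


lemma disj_sum:
  fixes z :: "'b::banach_lattice"
  assumes "finite I" "0 \<le> z" "\<And>i. i \<in> I \<Longrightarrow> 0 \<le> x i" "\<And>i. i \<in> I \<Longrightarrow> inf z (x i) = 0"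
  shows "inf z (\<Sum>i\<in>I. x i) = 0"
  using assms(1,3,4)
proof (induction I rule: finite_induct)
  case empty thus ?case using assms(2) by (simp add: inf_absorb2)
next
  case (insert a I)
  have s0: "0 \<le> (\<Sum>i\<in>I. x i)" using insert by (intro sum_nonneg) auto
  have "inf z (\<Sum>i\<in>insert a I. x i) = inf (x a + (\<Sum>i\<in>I. x i)) z"
    using insert by (simp add: inf_commute)
  also have "\<dots> \<le> inf (x a) z + inf (\<Sum>i\<in>I. x i) z"
    using insert s0 assms(2) by (intro inf_add_le_bl) auto
  also have "\<dots> = 0" using insert by (simp add: inf_commute)
  finally have "inf z (\<Sum>i\<in>insert a I. x i) \<le> 0" .
  moreover have "0 \<le> inf z (\<Sum>i\<in>insert a I. x i)"
    using insert s0 assms(2) by (simp add: add_nonneg_nonneg)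
  ultimately show ?case by (rule order.antisym)
qed

lemma g_lemma:
  fixes g :: "nat \<Rightarrow> 'b::banach_lattice"
  assumes ocu: "ocu u" and g0: "\<And>k. 0 \<le> g k" and gs: "\<And>n. (\<Sum>k<n. g k) \<le> u"
    and gn: "\<And>k. \<epsilon> \<le> norm (g k)" and e: "0 < \<epsilon>"
  shows False
proof -
  have u0: "0 \<le> u" using gs[of 0] by simp
  define \<delta> where "\<delta> = \<epsilon> / (2 * (norm u + 1))"
  have d0: "\<delta> > 0" unfolding \<delta>_def using e
    by (intro divide_pos_pos mult_pos_pos) (auto intro: add_nonneg_pos)
  have du: "\<delta> * norm u \<le> \<epsilon> / 2"
  proof -
    have "\<delta> * norm u = \<epsilon> / 2 * (norm u / (norm u + 1))" unfolding \<delta>_def by (simp add: field_simps)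
    also have "\<dots> \<le> \<epsilon> / 2 * 1" using e norm_ge_zero[of u]
      by (intro mult_left_mono) (auto simp: divide_le_eq_1 add_nonneg_pos)
    finally show ?thesis by simp
  qed
  define N where "N = nat \<lceil>1 / \<delta>\<rceil>"
  have Nd: "1 \<le> real (Suc N) * \<delta>"
  proof -
    have "1 / \<delta> \<le> real N" unfolding N_def by linarith
    hence "1 / \<delta> \<le> real (Suc N)" by simp
    thus ?thesis using d0 by (simp add: field_simps)
  qed
  define h where "h = (\<lambda>k. pprt (g k - \<delta> *\<^sub>R u))"
  have du0: "0 \<le> \<delta> *\<^sub>R u" using d0 u0 by (simp add: scaleR_nonneg_bl)
  have sumI: "(\<Sum>i\<in>I. g i) \<le> u" if "finite I" for I
  proof -
    have "(\<Sum>i\<in>I. g i) \<le> (\<Sum>i<Suc (Max (insert 0 I)). g i)"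
      using that g0 by (intro sum_mono2) (auto simp: less_Suc_eq_le)
    also have "\<dots> \<le> u" by (rule gs)
    finally show ?thesis .
  qed
  have h0: "0 \<le> h k" for k unfolding h_def by simp
  have hu: "h k \<le> u" for k
  proof -
    have "h k \<le> pprt (g k)" unfolding h_def using du0 by (intro pprt_mono) simp
    also have "\<dots> = g k" using g0 by simp
    also have "\<dots> \<le> u" using sumI[of "{k}"] by simp
    finally show ?thesis .
  qed
  have hn: "\<epsilon> / 2 \<le> norm (h k)" for k
  proof -
    have "g k - \<delta> *\<^sub>R u \<le> h k" unfolding h_def pprt_def by simp
    hence "g k \<le> h k + \<delta> *\<^sub>R u" by (simp add: algebra_simps)
    hence "norm (g k) \<le> norm (h k) + norm (\<delta> *\<^sub>R u)" using g0 by (intro norm_add_le_pos) auto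
    thus ?thesis using gn[of k] du d0 by simp
  qed
  have "mult_le N h" unfolding mult_le_def
  proof (intro allI impI)
    fix I :: "nat set" and z assume I: "card I = Suc N" and z: "0 \<le> z \<and> (\<forall>i\<in>I. z \<le> h i)"
    have fI: "finite I" using I by (simp add: card_ge_0_finite)
    define a where "a = (\<lambda>i. g i - \<delta> *\<^sub>R u)"
    have "(\<Sum>i\<in>I. a i) = (\<Sum>i\<in>I. g i) - real (card I) *\<^sub>R (\<delta> *\<^sub>R u)"
      unfolding a_def by (simp add: sum_subtractf sum_constant_scaleR)
    also have "\<dots> \<le> u - real (card I) *\<^sub>R (\<delta> *\<^sub>R u)" using sumI[OF fI] by simp
    also have "\<dots> = (1 - real (Suc N) * \<delta>) *\<^sub>R u" using I by (simp add: algebra_simps)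
    also have "\<dots> \<le> 0"
    proof -
      have "0 \<le> (real (Suc N) * \<delta> - 1) *\<^sub>R u" using Nd u0 by (intro scaleR_nonneg_bl) auto
      thus ?thesis by (simp add: algebra_simps)
    qed
    finally have sa: "(\<Sum>i\<in>I. a i) \<le> 0" .
    have "(\<Sum>i\<in>I. a i) = (\<Sum>i\<in>I. pprt (a i)) - (\<Sum>i\<in>I. pprt (- a i))"
      by (subst prts_bl) (simp add: sum_subtractf)
    with sa have sp: "(\<Sum>i\<in>I. pprt (a i)) \<le> (\<Sum>i\<in>I. pprt (- a i))" by simp
    have "real (card I) *\<^sub>R z = (\<Sum>i\<in>I. z)" by (simp add: sum_constant_scaleR)
    also have "\<dots> \<le> (\<Sum>i\<in>I. pprt (a i))" using z unfolding h_def a_def by (intro sum_mono) auto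
    finally have zle: "real (Suc N) *\<^sub>R z \<le> (\<Sum>i\<in>I. pprt (- a i))" using sp I by simp
    have "inf z (\<Sum>i\<in>I. pprt (- a i)) = 0"
    proof (rule disj_sum[OF fI])
      show "0 \<le> z" using z by simp
      fix i assume "i \<in> I"
      show "0 \<le> pprt (- a i)" by simp
      show "inf z (pprt (- a i)) = 0"
      proof (rule disj_below)
        show "0 \<le> z" using z by simp
        show "z \<le> pprt (a i)" using z \<open>i \<in> I\<close> unfolding h_def a_def by simp
        show "0 \<le> pprt (- a i)" by simp
        show "pprt (- a i) \<le> pprt (- a i)" by simp
        show "inf (pprt (a i)) (pprt (- a i)) = 0" by (rule inf_pprt_pprt_neg)
      qed
    qed
    hence "inf (real (Suc N) *\<^sub>R z) (1 *\<^sub>R (\<Sum>i\<in>I. pprt (- a i))) = 0"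
      using z by (intro disj_scale) (auto intro: sum_nonneg)
    hence "real (Suc N) *\<^sub>R z = 0" using zle by (simp add: inf_absorb1)
    thus "z = 0" by simp
  qed
  moreover have "0 < \<epsilon> / 2" using e by simp
  ultimately show False
    by (intro mult_ind[OF ocu, of N, rule_format, of "\<epsilon> / 2" h]) (use h0 hu hn in auto)
qed

lemma decr_cauchy:
  fixes P :: "nat \<Rightarrow> 'b::banach_lattice"
  assumes ocu: "ocu u" and P0: "\<And>n. 0 \<le> P n" and Pu: "\<And>n. P n \<le> u"
    and dec: "\<And>n. P (Suc n) \<le> P n"
  shows "Cauchy P"
proof (rule ccontr)
  assume nc: "\<not> Cauchy P"
  have decs: "P n \<le> P m" if "m \<le> n" for m n
    using that
  proof (induction rule: dec_induct)
    case base thus ?case by simp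
  next
    case (step k) thus ?case using order.trans[OF dec[of k]] by blast
  qed
  obtain e where e: "e > 0" "\<forall>M. \<exists>m\<ge>M. \<exists>n\<ge>M. \<not> dist (P m) (P n) < e"
    using nc unfolding Cauchy_def by blast
  have ex: "\<exists>n. M < n \<and> e / 2 \<le> norm (P M - P n)" for M
  proof -
    obtain m n where mn: "m \<ge> M" "n \<ge> M" "e \<le> dist (P m) (P n)" using e(2) by (meson not_le)
    have "dist (P m) (P n) \<le> dist (P M) (P m) + dist (P M) (P n)" by (rule dist_triangle3)
    hence "e / 2 \<le> dist (P M) (P m) \<or> e / 2 \<le> dist (P M) (P n)" using mn(3) by linarith
    thus ?thesis
    proof
      assume a: "e / 2 \<le> dist (P M) (P m)"
      hence "m \<noteq> M" using e by auto
      thus ?thesis using a mn(1) by (intro exI[of _ m]) (simp add: dist_norm)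
    next
      assume a: "e / 2 \<le> dist (P M) (P n)"
      hence "n \<noteq> M" using e by auto
      thus ?thesis using a mn(2) by (intro exI[of _ n]) (simp add: dist_norm)
    qed
  qed
  define s where "s = rec_nat 0 (\<lambda>_ M. SOME n. M < n \<and> e / 2 \<le> norm (P M - P n))"
  have sS: "s (Suc k) = (SOME n. s k < n \<and> e / 2 \<le> norm (P (s k) - P n))" for k
    by (simp add: s_def)
  have sP: "s k < s (Suc k) \<and> e / 2 \<le> norm (P (s k) - P (s (Suc k)))" for k
    unfolding sS by (rule someI_ex) (rule ex)
  define g where "g = (\<lambda>k. P (s k) - P (s (Suc k)))"
  have g0: "0 \<le> g k" for k unfolding g_def using decs[of "s k" "s (Suc k)"] sP[of k] by simp
  have gs: "(\<Sum>k<n. g k) \<le> u" for n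
  proof -
    have "(\<Sum>k<n. g k) = P (s 0) - P (s n)" unfolding g_def by (rule sum_lessThan_telescope')
    also have "\<dots> \<le> P (s 0)" using P0 by simp
    also have "\<dots> \<le> u" by (rule Pu)
    finally show ?thesis .
  qed
  have gn: "e / 2 \<le> norm (g k)" for k unfolding g_def using sP by simp
  show False by (rule g_lemma[OF ocu g0 gs gn]) (use e in simp)
qed


lemma sup_le_add_pos:
  fixes a b :: "'b::banach_lattice"
  assumes "0 \<le> a" "0 \<le> b" shows "sup a b \<le> a + b"
  using assms by (auto intro: le_supI add_increasing add_increasing2)

lemma no_uniform:
  fixes g :: "nat \<Rightarrow> ('b::banach_lattice \<Rightarrow>\<^sub>L real)"
  assumes ocu: "ocu u" and u0: "0 \<le> u" and gM: "\<And>n. norm (g n) \<le> M"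
    and gd: "\<And>n m. n \<noteq> m \<Longrightarrow> dual_disjoint (g n) (g m)"
    and e: "0 < \<epsilon>" and ge: "\<And>n. \<epsilon> \<le> dual_abs (g n) u"
  shows False
proof -
  define \<eta> where "\<eta> = \<epsilon> / 16"
  have eta: "\<eta> > 0" using e by (simp add: \<eta>_def)
  define a where "a = (\<lambda>n. dual_abs (g n))"
  define B where "B = (\<lambda>m::nat. \<eta> * (1/2) ^ m)"
  have Bpos: "0 < B m" for m using eta by (simp add: B_def)
  have Bmono: "B n \<le> B m" if "m \<le> n" for m n
    unfolding B_def using that eta by (intro mult_left_mono power_decreasing) auto
  have zex: "\<exists>z. 0 \<le> z \<and> z \<le> u \<and> a n z + a m (u - z) < B m" if "n < m" for n m
    unfolding a_def using dd_split[OF gd u0 Bpos[of m]] that by auto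
  define Z where "Z = (\<lambda>n m. SOME z. 0 \<le> z \<and> z \<le> u \<and> a n z + a m (u - z) < B m)"
  have ZP: "0 \<le> Z n m \<and> Z n m \<le> u \<and> a n (Z n m) + a m (u - Z n m) < B m" if "n < m" for n m
    unfolding Z_def by (rule someI_ex) (rule zex[OF that])
  have a0: "0 \<le> a n x" if "0 \<le> x" for n x unfolding a_def using da_nonneg that .
  define A where "A = (\<lambda>n m. if n < m then pprt (u - 2 *\<^sub>R Z n m) else pprt (2 *\<^sub>R Z m n - u))"
  have A0: "0 \<le> A n m" for n m unfolding A_def by simp
  have Au: "A n m \<le> u" if "n \<noteq> m" for n m
  proof (cases "n < m")
    case True
    have "A n m = pprt (u - 2 *\<^sub>R Z n m)" using True by (simp add: A_def)
    also have "\<dots> \<le> pprt u" using ZP[OF True] by (intro pprt_mono) (simp add: scaleR_nonneg_bl)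
    finally show ?thesis using u0 by simp
  next
    case False
    hence mn: "m < n" using that by simp
    have "A n m = pprt (2 *\<^sub>R Z m n - u)" using False by (simp add: A_def)
    also have "\<dots> \<le> pprt u"
    proof (rule pprt_mono)
      have "2 *\<^sub>R Z m n = Z m n + Z m n" by (simp add: scaleR_2)
      also have "\<dots> \<le> u + u" using ZP[OF mn] by (intro add_mono) auto
      finally show "2 *\<^sub>R Z m n - u \<le> u" by (simp add: algebra_simps)
    qed
    finally show ?thesis using u0 by simp
  qed
  have Ad: "inf (A n m) (A m n) = 0" if "n \<noteq> m" for n m
  proof (cases "n < m")
    case True
    hence "A n m = pprt (u - 2 *\<^sub>R Z n m)" "A m n = pprt (2 *\<^sub>R Z n m - u)" by (auto simp: A_def)
    thus ?thesis by (simp add: disj_pprt_diff)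
  next
    case False
    hence "m < n" using that by simp
    hence "A m n = pprt (u - 2 *\<^sub>R Z m n)" "A n m = pprt (2 *\<^sub>R Z m n - u)" by (auto simp: A_def)
    thus ?thesis using disj_pprt_diff[of u "2 *\<^sub>R Z m n"] by (simp add: inf_commute)
  qed
  have Aloss: "a n (u - A n m) \<le> 2 * B m" if "n \<noteq> m" for n m
  proof (cases "n < m")
    case True
    let ?z = "Z n m"
    have z: "0 \<le> ?z" "?z \<le> u" "a n ?z < B m" using ZP[OF True] a0[of "u - ?z" m] by auto
    have "u - A n m = inf (2 *\<^sub>R ?z) u"
    proof -
      have "u - A n m = u - sup (u - 2 *\<^sub>R ?z) 0" using True by (simp add: A_def pprt_def)
      also have "\<dots> = u + inf (- (u - 2 *\<^sub>R ?z)) (- 0)" by (rule diff_sup_eq_inf)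
      also have "\<dots> = inf (u + - (u - 2 *\<^sub>R ?z)) (u + - 0)" by (rule add_inf_distrib_left)
      also have "\<dots> = inf (2 *\<^sub>R ?z) u" by simp
      finally show ?thesis .
    qed
    hence "a n (u - A n m) = a n (inf (2 *\<^sub>R ?z) u)" by simp
    also have "\<dots> \<le> a n (2 *\<^sub>R ?z)" unfolding a_def using z u0
      by (intro da_mono) (auto simp: scaleR_nonneg_bl)
    also have "\<dots> = a n (?z + ?z)" by (simp add: scaleR_2)
    also have "\<dots> \<le> a n ?z + a n ?z" unfolding a_def using z by (intro da_subadd) auto
    also have "\<dots> \<le> 2 * B m" using z by simp
    finally show ?thesis .
  next
    case False
    hence mn: "m < n" using that by simp
    let ?z = "Z m n"
    have z: "0 \<le> ?z" "?z \<le> u" "a n (u - ?z) < B n" using ZP[OF mn] a0[of ?z m] by auto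
    have uz: "0 \<le> u - ?z" using z by simp
    have "u - A n m = inf (2 *\<^sub>R (u - ?z)) u"
    proof -
      have "u - A n m = u - sup (2 *\<^sub>R ?z - u) 0" using False by (simp add: A_def pprt_def)
      also have "\<dots> = u + inf (- (2 *\<^sub>R ?z - u)) (- 0)" by (rule diff_sup_eq_inf)
      also have "\<dots> = inf (u + - (2 *\<^sub>R ?z - u)) (u + - 0)" by (rule add_inf_distrib_left)
      also have "u + - (2 *\<^sub>R ?z - u) = 2 *\<^sub>R (u - ?z)" by (simp add: algebra_simps scaleR_2)
      finally show ?thesis by simp
    qed
    hence "a n (u - A n m) = a n (inf (2 *\<^sub>R (u - ?z)) u)" by simp
    also have "\<dots> \<le> a n (2 *\<^sub>R (u - ?z))" unfolding a_def using uz u0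
      by (intro da_mono) (auto simp: scaleR_nonneg_bl)
    also have "\<dots> = a n ((u - ?z) + (u - ?z))" by (simp add: scaleR_2)
    also have "\<dots> \<le> a n (u - ?z) + a n (u - ?z)" unfolding a_def using uz by (intro da_subadd) auto
    also have "\<dots> \<le> 2 * B n" using z by simp
    also have "\<dots> \<le> 2 * B m" using Bmono[of m n] mn by simp
    finally show ?thesis .
  qed
  define Y where "Y = (\<lambda>n. rec_nat u (\<lambda>K y. if K = n then y else inf y (A n K)))"
  have Y0: "Y n 0 = u" for n by (simp add: Y_def)
  have YS: "Y n (Suc K) = (if K = n then Y n K else inf (Y n K) (A n K))" for n K by (simp add: Y_def)
  have Ypos: "0 \<le> Y n K \<and> Y n K \<le> u" for n K
    by (induction K) (auto simp: Y0 YS u0 A0 intro: le_infI1)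
  have Ydec: "Y n (Suc K) \<le> Y n K" for n K by (simp add: YS)
  have Yle: "Y n K \<le> A n m" if "m < K" "m \<noteq> n" for n m K
    using that
  proof (induction K)
    case 0 thus ?case by simp
  next
    case (Suc K)
    show ?case
    proof (cases "m = K")
      case True thus ?thesis using Suc by (simp add: YS)
    next
      case False
      hence "Y n K \<le> A n m" using Suc by simp
      thus ?thesis by (cases "K = n") (auto simp: YS le_infI1)
    qed
  qed
  define L where "L = (\<lambda>n m. if m = n then 0 else u - A n m)"
  have L0: "0 \<le> L n m" for n m unfolding L_def using Au by simp
  have Ysum: "u - Y n K \<le> (\<Sum>m<K. L n m)" for n K
  proof (induction K)
    case 0 thus ?case by (simp add: Y0)
  next
    case (Suc K)
    show ?case
    proof (cases "K = n")
      case True thus ?thesis using Suc by (simp add: YS L_def)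
    next
      case False
      have "u - Y n (Suc K) = u - inf (Y n K) (A n K)" using False by (simp add: YS)
      also have "\<dots> = sup (u - Y n K) (u - A n K)" by (simp add: diff_inf_eq_sup add_sup_distrib_left)
      also have "\<dots> \<le> (u - Y n K) + (u - A n K)"
        using Ypos[of n K] Au[of n K] False by (intro sup_le_add_pos) auto
      also have "\<dots> \<le> (\<Sum>m<K. L n m) + L n K" using Suc False by (simp add: L_def)
      finally show ?thesis by simp
    qed
  qed
  have aY: "\<epsilon> - 4 * \<eta> \<le> a n (Y n K)" for n K
  proof -
    have "a n (u - Y n K) \<le> a n (\<Sum>m<K. L n m)"
      unfolding a_def using Ypos[of n K] Ysum[of n K] by (intro da_mono) auto
    also have "\<dots> \<le> (\<Sum>m<K. a n (L n m))" unfolding a_def using L0 by (intro da_sum) auto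
    also have "\<dots> \<le> (\<Sum>m<K. 2 * B m)"
    proof (rule sum_mono)
      fix m assume "m \<in> {..<K}"
      show "a n (L n m) \<le> 2 * B m"
      proof (cases "m = n")
        case True
        have "a n 0 \<le> norm (g n) * norm (0::'b)" unfolding a_def by (rule da_le_norm) simp
        thus ?thesis using True Bpos[of m] by (simp add: L_def)
      next
        case False thus ?thesis using Aloss[of n m] by (simp add: L_def)
      qed
    qed
    also have "\<dots> = 2 * \<eta> * (\<Sum>m<K. (1/2::real) ^ m)" unfolding B_def by (simp add: sum_distrib_left mult.assoc)
    also have "\<dots> \<le> 2 * \<eta> * 2"
    proof -
      have "(\<Sum>m<K. (1/2::real) ^ m) \<le> 2"
      proof -
        have "(\<Sum>m<K. (1/2::real) ^ m) \<le> (\<Sum>m. (1/2::real) ^ m)"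
          by (intro sum_le_suminf) auto
        also have "\<dots> = 2" using suminf_geometric[of "1/2::real"] by simp
        finally show ?thesis .
      qed
      thus ?thesis using eta by simp
    qed
    finally have l: "a n (u - Y n K) \<le> 4 * \<eta>" by simp
    have "a n u = a n (Y n K + (u - Y n K))" by simp
    also have "\<dots> \<le> a n (Y n K) + a n (u - Y n K)" unfolding a_def using Ypos[of n K]
      by (intro da_subadd) auto
    finally show ?thesis using ge[of n] l unfolding a_def by simp
  qed
  have Ydisj: "inf (Y n K) (Y m K) = 0" if "n \<noteq> m" "max n m < K" for n m K
  proof -
    have 1: "Y n K \<le> A n m" using that by (intro Yle) auto
    have 2: "Y m K \<le> A m n" using that by (intro Yle) auto
    show ?thesis using Ypos[of n K] Ypos[of m K] by (intro disj_below[OF _ 1 _ 2 Ad[OF that(1)]]) auto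
  qed
  have "Cauchy (Y n)" for n
    by (rule decr_cauchy[OF ocu]) (use Ypos Ydec in auto)
  hence "convergent (Y n)" for n by (simp add: Cauchy_convergent_iff)
  define y where "y = (\<lambda>n. lim (Y n))"
  have Yy: "Y n \<longlonglongrightarrow> y n" for n unfolding y_def using \<open>\<And>n. convergent (Y n)\<close>
    by (simp add: convergent_LIMSEQ_iff)
  have yY: "y n \<le> Y n K" for n K
  proof -
    have "(\<lambda>j. Y n (j + K)) \<longlonglongrightarrow> y n" using Yy by (rule LIMSEQ_ignore_initial_segment)
    moreover have "Y n (j + K) \<le> Y n K" for j
    proof (induction j)
      case 0 show ?case by simp
    next
      case (Suc j) show ?case using order.trans[OF Ydec[of n "j + K"] Suc] by simp
    qed
    ultimately show ?thesis by (rule closed_cone_ge)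
  qed
  have y0: "0 \<le> y n" for n by (rule closed_cone[OF Yy]) (use Ypos in blast)
  have yu: "y n \<le> u" for n using yY[of n 0] by (simp add: Y0)
  have yd: "inf (y n) (y m) = 0" if "n \<noteq> m" for n m
  proof -
    have "inf (Y n (Suc (max n m))) (Y m (Suc (max n m))) = 0" using that by (intro Ydisj) auto
    thus ?thesis by (intro disj_below[OF y0 yY y0 yY])
  qed
  have M0: "0 \<le> M" using gM[of 0] norm_ge_zero[of "g 0"] by linarith
  have ay: "\<epsilon> - 4 * \<eta> \<le> a n (y n)" for n
  proof -
    have le: "\<epsilon> - 4 * \<eta> \<le> a n (y n) + M * norm (Y n K - y n)" for K
    proof -
      have "a n (Y n K) \<le> a n (y n) + norm (g n) * norm (Y n K - y n)"
        unfolding a_def using Ypos y0 by (intro da_cont) auto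
      also have "\<dots> \<le> a n (y n) + M * norm (Y n K - y n)"
        using gM[of n] by (simp add: mult_right_mono)
      finally show ?thesis using aY[of n K] by simp
    qed
    have "(\<lambda>K. a n (y n) + M * norm (Y n K - y n)) \<longlonglongrightarrow> a n (y n) + M * 0"
      using Yy[of n] by (intro tendsto_intros) (simp add: LIM_zero tendsto_norm_zero)
    thus ?thesis using le by (intro LIMSEQ_le_const) auto
  qed
  have yn: "(3 * \<epsilon> / 4) / (M + 1) \<le> norm (y n)" for n
  proof -
    have "a n (y n) \<le> norm (g n) * norm (y n)" unfolding a_def using y0 by (rule da_le_norm)
    also have "\<dots> \<le> (M + 1) * norm (y n)" using gM[of n] by (intro mult_right_mono) auto
    finally have "3 * \<epsilon> / 4 \<le> (M + 1) * norm (y n)" using ay[of n] unfolding \<eta>_def by simp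
    thus ?thesis using M0 by (simp add: field_simps)
  qed
  show False
    by (rule ocu_contra[OF ocu y0 yu yd _ yn]) (use e M0 in auto)
qed


lemma disj_null:
  fixes f :: "nat \<Rightarrow> ('b::banach_lattice \<Rightarrow>\<^sub>L real)"
  assumes ocu: "ocu u" and u0: "0 \<le> u" and fM: "\<And>n. norm (f n) \<le> M"
    and fd: "\<And>n m. n \<noteq> m \<Longrightarrow> dual_disjoint (f n) (f m)"
  shows "(\<lambda>n. dual_abs (f n) u) \<longlonglongrightarrow> 0"
proof (rule ccontr)
  assume nt: "\<not> (\<lambda>n. dual_abs (f n) u) \<longlonglongrightarrow> 0"
  have "\<exists>r>0. \<forall>no. \<exists>n\<ge>no. r \<le> dual_abs (f n) u"
  proof (rule ccontr)
    assume "\<not> ?thesis"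
    hence "\<forall>r>0. \<exists>no. \<forall>n\<ge>no. dual_abs (f n) u < r" by (meson not_le)
    hence "\<forall>r>0. \<exists>no. \<forall>n\<ge>no. norm (dual_abs (f n) u - 0) < r"
      using da_nonneg[OF u0] by simp
    hence "(\<lambda>n. dual_abs (f n) u) \<longlonglongrightarrow> 0" by (simp only: LIMSEQ_iff)
    with nt show False by simp
  qed
  then obtain r where r: "r > 0" "\<And>no. \<exists>n\<ge>no. r \<le> dual_abs (f n) u" by blast
  define L where "L = {n. r \<le> dual_abs (f n) u}"
  have infL: "infinite L" unfolding infinite_nat_iff_unbounded_le L_def using r(2) by blast
  define \<sigma> where "\<sigma> = enumerate L"
  have \<sigma>L: "\<sigma> i \<in> L" for i unfolding \<sigma>_def using infL by (rule enumerate_in_set)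
  have \<sigma>inj: "inj \<sigma>" unfolding \<sigma>_def using infL
    by (intro strict_mono_imp_inj_on) (simp add: strict_mono_def enumerate_mono)
  show False
  proof (rule no_uniform[OF ocu u0, of "\<lambda>i. f (\<sigma> i)" M r])
    show "norm (f (\<sigma> n)) \<le> M" for n by (rule fM)
    show "dual_disjoint (f (\<sigma> n)) (f (\<sigma> m))" if "n \<noteq> m" for n m
      using that \<sigma>inj by (intro fd) (auto dest: injD)
    show "0 < r" by (rule r(1))
    show "r \<le> dual_abs (f (\<sigma> n)) u" for n using \<sigma>L[of n] unfolding L_def by simp
  qed
qed

lemma forward_dir:
  fixes T :: "'a::banach \<Rightarrow> 'b::banach_lattice"
  assumes lw: "limitedly_LWC T" and fb: "bounded (range f)"
    and fd: "\<forall>n m. n \<noteq> m \<longrightarrow> dual_disjoint (f n) (f m)"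
  shows "(\<lambda>n. blinfun_apply (f n) (T x)) \<longlonglongrightarrow> 0"
proof -
  have "limited_set {x}" unfolding limited_set_def
  proof (intro conjI allI impI)
    show "bounded {x}" by simp
    fix g :: "nat \<Rightarrow> ('a \<Rightarrow>\<^sub>L real)" and e :: real
    assume g: "\<forall>x. (\<lambda>n. blinfun_apply (g n) x) \<longlonglongrightarrow> 0" and e: "0 < e"
    have "(\<lambda>n. blinfun_apply (g n) x) \<longlonglongrightarrow> 0" using g by blast
    hence "eventually (\<lambda>n. dist (blinfun_apply (g n) x) 0 < e) sequentially"
      using e by (rule tendstoD)
    thus "\<forall>\<^sub>F n in sequentially. \<forall>a\<in>{x}. \<bar>blinfun_apply (g n) a\<bar> < e"
      by (simp add: dist_real_def)
  qed
  hence "Lwc_set (T ` {x})" using lw unfolding limitedly_LWC_def by blast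
  hence lw1: "Lwc_set {T x}" by simp
  define u where "u = lat_abs (T x)"
  have u0: "0 \<le> u" unfolding u_def by (rule lat_abs_nonneg)
  have ocu: "ocu u" unfolding ocu_def
  proof (intro allI impI)
    fix e :: "nat \<Rightarrow> 'b" assume a: "(\<forall>n. 0 \<le> e n \<and> e n \<le> u) \<and> (\<forall>n m. n \<noteq> m \<longrightarrow> inf (e n) (e m) = 0)"
    have "lat_abs (e n) \<le> lat_abs (T x)" for n using a lat_abs_pos[of "e n"] by (simp add: u_def)
    hence s1: "\<forall>n. e n \<in> sol {T x}" unfolding sol_def by simp
    have "lat_abs (e n) = e n" for n using a lat_abs_pos[of "e n"] by simp
    hence s2: "disjoint_seq e" unfolding disjoint_seq_def using a by simp
    show "(\<lambda>n. norm (e n)) \<longlonglongrightarrow> 0" using lw1 s1 s2 unfolding Lwc_set_def by blast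
  qed
  obtain M where M: "\<forall>y\<in>range f. norm y \<le> M" using fb unfolding bounded_iff by blast
  have fM: "norm (f n) \<le> M" for n using M by simp
  have fd': "dual_disjoint (f n) (f m)" if "n \<noteq> m" for n m using fd that by blast
  have lim: "(\<lambda>n. dual_abs (f n) u) \<longlonglongrightarrow> 0" by (rule disj_null[OF ocu u0 fM fd'])
  have le: "norm (blinfun_apply (f n) (T x)) \<le> dual_abs (f n) u" for n
    unfolding u_def real_norm_def by (rule da_abs)
  show ?thesis
    by (rule Lim_null_comparison[OF always_eventually lim]) (use le in blast)
qed


definition lsub :: "('v::real_vector \<times> real) set \<Rightarrow> bool" where
  "lsub G \<longleftrightarrow> (0, 0) \<in> G \<and> (\<forall>x a y b. (x, a) \<in> G \<longrightarrow> (y, b) \<in> G \<longrightarrow> (x + y, a + b) \<in> G)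
     \<and> (\<forall>s x a. (x, a) \<in> G \<longrightarrow> (s *\<^sub>R x, s * a) \<in> G)"

definition functional :: "('v \<times> real) set \<Rightarrow> bool" where
  "functional G \<longleftrightarrow> (\<forall>x a b. (x, a) \<in> G \<longrightarrow> (x, b) \<in> G \<longrightarrow> a = b)"

definition hb_family :: "('v::real_vector \<Rightarrow> real) \<Rightarrow> 'v \<Rightarrow> ('v \<times> real) set set" where
  "hb_family p v = {G. lsub G \<and> functional G \<and> (\<forall>x a. (x, a) \<in> G \<longrightarrow> a \<le> p x) \<and> (v, p v) \<in> G}"

lemma hahn_banach:
  fixes p :: "'v::real_vector \<Rightarrow> real"
  assumes sub: "\<And>x y. p (x + y) \<le> p x + p y"
    and hom: "\<And>c x. 0 \<le> c \<Longrightarrow> p (c *\<^sub>R x) = c * p x"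
  shows "\<exists>\<phi>. (\<forall>x y. \<phi> (x + y) = \<phi> x + \<phi> y) \<and> (\<forall>c x. \<phi> (c *\<^sub>R x) = c * \<phi> x)
            \<and> (\<forall>x. \<phi> x \<le> p x) \<and> \<phi> v = p v"
proof -
  have p0: "p 0 = 0" using hom[of 0 v] by simp
  have pneg: "t * p x \<le> p (t *\<^sub>R x)" for t x
  proof (cases "0 \<le> t")
    case True thus ?thesis using hom by simp
  next
    case False
    have "0 = p (t *\<^sub>R x + (- t) *\<^sub>R x)" using p0 by (simp add: scaleR_left_distrib[symmetric])
    also have "\<dots> \<le> p (t *\<^sub>R x) + p ((- t) *\<^sub>R x)" by (rule sub)
    also have "p ((- t) *\<^sub>R x) = (- t) * p x" using False by (intro hom) simp
    finally show ?thesis by simp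
  qed
  let ?F = "hb_family p v"
  define G0 where "G0 = {(t *\<^sub>R v, t * p v) | t. True}"
  have G0F: "G0 \<in> ?F" unfolding hb_family_def
  proof (intro CollectI conjI)
    show "lsub G0" unfolding lsub_def G0_def
    proof (intro conjI allI impI)
      show "(0, 0) \<in> {(t *\<^sub>R v, t * p v) |t. True}" by (auto intro!: exI[of _ 0])
      fix x a y b
      assume "(x, a) \<in> {(t *\<^sub>R v, t * p v) |t. True}" "(y, b) \<in> {(t *\<^sub>R v, t * p v) |t. True}"
      then obtain t1 t2 where "x = t1 *\<^sub>R v" "a = t1 * p v" "y = t2 *\<^sub>R v" "b = t2 * p v" by auto
      thus "(x + y, a + b) \<in> {(t *\<^sub>R v, t * p v) |t. True}"
        by (auto intro!: exI[of _ "t1 + t2"] simp: scaleR_left_distrib distrib_right)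
    next
      fix s x a assume "(x, a) \<in> {(t *\<^sub>R v, t * p v) |t. True}"
      then obtain t1 where "x = t1 *\<^sub>R v" "a = t1 * p v" by auto
      thus "(s *\<^sub>R x, s * a) \<in> {(t *\<^sub>R v, t * p v) |t. True}"
        by (auto intro!: exI[of _ "s * t1"])
    qed
    show "functional G0" unfolding functional_def G0_def
    proof (intro allI impI)
      fix x a b assume "(x, a) \<in> {(t *\<^sub>R v, t * p v) |t. True}" "(x, b) \<in> {(t *\<^sub>R v, t * p v) |t. True}"
      then obtain t1 t2 where e: "x = t1 *\<^sub>R v" "a = t1 * p v" "x = t2 *\<^sub>R v" "b = t2 * p v" by blast
      show "a = b"
      proof (cases "v = 0")
        case True thus ?thesis using e p0 by simp
      next
        case False
        hence "t1 = t2" using e by (metis scaleR_cancel_right)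
        thus ?thesis using e by simp
      qed
    qed
    show "\<forall>x a. (x, a) \<in> G0 \<longrightarrow> a \<le> p x" unfolding G0_def using pneg by auto
    show "(v, p v) \<in> G0" unfolding G0_def by (auto intro!: exI[of _ 1])
  qed
  have "\<exists>M\<in>?F. \<forall>X\<in>?F. M \<subseteq> X \<longrightarrow> X = M"
  proof (rule Zorn_Lemma2, intro ballI)
    fix C assume C: "C \<in> chains ?F"
    show "\<exists>U\<in>?F. \<forall>X\<in>C. X \<subseteq> U"
    proof (cases "C = {}")
      case True thus ?thesis using G0F by auto
    next
      case False
      have CF: "C \<subseteq> ?F" and ch: "\<And>X Y. X \<in> C \<Longrightarrow> Y \<in> C \<Longrightarrow> X \<subseteq> Y \<or> Y \<subseteq> X"
        using C unfolding chains_def chain_subset_def by auto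
      have two: "\<exists>X\<in>C. (x, a) \<in> X \<and> (y, b) \<in> X" if a1: "(x, a) \<in> \<Union>C" and a2: "(y, b) \<in> \<Union>C" for x a y b
      proof -
        obtain X where "X \<in> C" "(x, a) \<in> X" using a1 by blast
        moreover obtain Y where "Y \<in> C" "(y, b) \<in> Y" using a2 by blast
        ultimately have "X \<in> C" "Y \<in> C" "(x, a) \<in> X" "(y, b) \<in> Y" by auto
        thus ?thesis using ch[of X Y] by auto
      qed
      have "\<Union>C \<in> ?F" unfolding hb_family_def
      proof (intro CollectI conjI)
        obtain X0 where X0: "X0 \<in> C" using False by auto
        show "lsub (\<Union>C)" unfolding lsub_def
        proof (intro conjI allI impI)
          show "(0, 0) \<in> \<Union>C" using X0 CF unfolding hb_family_def lsub_def by auto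
          fix x a y b assume "(x, a) \<in> \<Union>C" "(y, b) \<in> \<Union>C"
          then obtain X where "X \<in> C" "(x, a) \<in> X" "(y, b) \<in> X" using two by blast
          thus "(x + y, a + b) \<in> \<Union>C" using CF unfolding hb_family_def lsub_def by blast
        next
          fix s x a assume "(x, a) \<in> \<Union>C"
          then obtain X where "X \<in> C" "(x, a) \<in> X" by blast
          thus "(s *\<^sub>R x, s * a) \<in> \<Union>C" using CF unfolding hb_family_def lsub_def by blast
        qed
        show "functional (\<Union>C)" unfolding functional_def
        proof (intro allI impI)
          fix x a b assume "(x, a) \<in> \<Union>C" "(x, b) \<in> \<Union>C"
          then obtain X where "X \<in> C" "(x, a) \<in> X" "(x, b) \<in> X" using two by blast
          thus "a = b" using CF unfolding hb_family_def functional_def by blast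
        qed
        show "\<forall>x a. (x, a) \<in> \<Union>C \<longrightarrow> a \<le> p x" using CF unfolding hb_family_def by blast
        show "(v, p v) \<in> \<Union>C" using X0 CF unfolding hb_family_def by blast
      qed
      thus ?thesis by blast
    qed
  qed
  then obtain M where MF: "M \<in> ?F" and Mmax: "\<And>X. X \<in> ?F \<Longrightarrow> M \<subseteq> X \<Longrightarrow> X = M" by blast
  have Ml: "lsub M" and Mf: "functional M" and Md: "\<And>x a. (x, a) \<in> M \<Longrightarrow> a \<le> p x"
    and Mv: "(v, p v) \<in> M"
    using MF unfolding hb_family_def by auto
  have M0: "(0, 0) \<in> M" and Madd: "\<And>x a y b. (x, a) \<in> M \<Longrightarrow> (y, b) \<in> M \<Longrightarrow> (x + y, a + b) \<in> M"
    and Msc: "\<And>s x a. (x, a) \<in> M \<Longrightarrow> (s *\<^sub>R x, s * a) \<in> M"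
    using Ml unfolding lsub_def by auto
  have total: "\<exists>a. (x, a) \<in> M" for x
  proof (rule ccontr)
    assume nw: "\<not> (\<exists>a. (x, a) \<in> M)"
    define w where "w = x"
    have nw': "\<And>a. (w, a) \<notin> M" using nw unfolding w_def by blast
    let ?L = "{b - p (y - w) | y b. (y, b) \<in> M}"
    have Lb: "r \<le> p (y' + w) - b'" if l1: "r \<in> ?L" and l2: "(y', b') \<in> M" for r y' b'
    proof -
      obtain y b where r: "r = b - p (y - w)" "(y, b) \<in> M" using l1 by blast
      have "b + b' \<le> p (y + y')" using Md[OF Madd[OF r(2) l2]] .
      also have "\<dots> = p ((y - w) + (y' + w))" by (simp add: algebra_simps)
      also have "\<dots> \<le> p (y - w) + p (y' + w)" by (rule sub)
      finally show ?thesis using r(1) by simp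
    qed
    define c where "c = Sup ?L"
    have Lne: "?L \<noteq> {}" using M0 by blast
    have Lbdd: "bdd_above ?L"
    proof (rule bdd_aboveI[where M = "p w"])
      fix r assume "r \<in> ?L" thus "r \<le> p w" using Lb[of r 0 0] M0 by simp
    qed
    have c1: "b - p (y - w) \<le> c" if "(y, b) \<in> M" for y b
      unfolding c_def using that Lbdd by (intro cSup_upper) auto
    have c2: "c \<le> p (y + w) - b" if "(y, b) \<in> M" for y b
      unfolding c_def using Lne Lb[OF _ that] by (intro cSup_least) auto
    define M' where "M' = {(y + t *\<^sub>R w, b + t * c) | y b t. (y, b) \<in> M}"
    have "M' \<in> ?F" unfolding hb_family_def
    proof (intro CollectI conjI)
      show "lsub M'" unfolding lsub_def M'_def
      proof (intro conjI allI impI)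
        show "(0, 0) \<in> {(y + t *\<^sub>R w, b + t * c) | y b t. (y, b) \<in> M}"
          using M0 by (auto intro!: exI[of _ 0])
        fix x1 a1 x2 a2
        assume "(x1, a1) \<in> {(y + t *\<^sub>R w, b + t * c) | y b t. (y, b) \<in> M}"
          "(x2, a2) \<in> {(y + t *\<^sub>R w, b + t * c) | y b t. (y, b) \<in> M}"
        then obtain y1 b1 t1 y2 b2 t2 where e: "x1 = y1 + t1 *\<^sub>R w" "a1 = b1 + t1 * c" "(y1, b1) \<in> M"
          "x2 = y2 + t2 *\<^sub>R w" "a2 = b2 + t2 * c" "(y2, b2) \<in> M" by blast
        have "x1 + x2 = (y1 + y2) + (t1 + t2) *\<^sub>R w" using e by (simp add: algebra_simps)
        moreover have "a1 + a2 = (b1 + b2) + (t1 + t2) * c" using e by (simp add: algebra_simps)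
        ultimately show "(x1 + x2, a1 + a2) \<in> {(y + t *\<^sub>R w, b + t * c) | y b t. (y, b) \<in> M}"
          using Madd[OF e(3) e(6)] by blast
      next
        fix s x1 a1 assume "(x1, a1) \<in> {(y + t *\<^sub>R w, b + t * c) | y b t. (y, b) \<in> M}"
        then obtain y1 b1 t1 where e: "x1 = y1 + t1 *\<^sub>R w" "a1 = b1 + t1 * c" "(y1, b1) \<in> M" by blast
        have "s *\<^sub>R x1 = s *\<^sub>R y1 + (s * t1) *\<^sub>R w" using e by (simp add: algebra_simps)
        moreover have "s * a1 = s * b1 + (s * t1) * c" using e by (simp add: algebra_simps)
        ultimately show "(s *\<^sub>R x1, s * a1) \<in> {(y + t *\<^sub>R w, b + t * c) | y b t. (y, b) \<in> M}"
          using Msc[OF e(3)] by blast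
      qed
      show "functional M'" unfolding functional_def M'_def
      proof (intro allI impI)
        fix x a1 a2
        assume "(x, a1) \<in> {(y + t *\<^sub>R w, b + t * c) | y b t. (y, b) \<in> M}"
          "(x, a2) \<in> {(y + t *\<^sub>R w, b + t * c) | y b t. (y, b) \<in> M}"
        then obtain y1 b1 t1 y2 b2 t2 where e: "x = y1 + t1 *\<^sub>R w" "a1 = b1 + t1 * c" "(y1, b1) \<in> M"
          "x = y2 + t2 *\<^sub>R w" "a2 = b2 + t2 * c" "(y2, b2) \<in> M" by blast
        have t: "t1 = t2"
        proof (rule ccontr)
          assume ne: "t1 \<noteq> t2"
          have d: "(y2 + (-1) *\<^sub>R y1, b2 + (-1) * b1) \<in> M" using Madd[OF e(6) Msc[OF e(3)]] .
          have h: "(t1 - t2) *\<^sub>R w = y2 + (-1) *\<^sub>R y1"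
          proof -
            have "y1 + t1 *\<^sub>R w = y2 + t2 *\<^sub>R w" using e by simp
            thus ?thesis by (simp add: algebra_simps)
          qed
          have "w = (1 / (t1 - t2)) *\<^sub>R ((t1 - t2) *\<^sub>R w)" using ne by simp
          also have "\<dots> = (1 / (t1 - t2)) *\<^sub>R (y2 + (-1) *\<^sub>R y1)" by (simp only: h)
          finally have weq: "w = (1 / (t1 - t2)) *\<^sub>R (y2 + (-1) *\<^sub>R y1)" .
          have m: "((1 / (t1 - t2)) *\<^sub>R (y2 + (-1) *\<^sub>R y1), (1 / (t1 - t2)) * (b2 + (-1) * b1)) \<in> M"
            by (rule Msc[OF d])
          show False using m nw' unfolding weq[symmetric] by blast
        qed
        hence "y1 = y2" using e by simp
        hence "b1 = b2" using Mf e unfolding functional_def by blast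
        thus "a1 = a2" using e t by simp
      qed
      show "\<forall>x a. (x, a) \<in> M' \<longrightarrow> a \<le> p x"
      proof (intro allI impI)
        fix x a assume "(x, a) \<in> M'"
        then obtain y b t where e: "x = y + t *\<^sub>R w" "a = b + t * c" "(y, b) \<in> M"
          unfolding M'_def by blast
        consider "t = 0" | "t > 0" | "t < 0" by linarith
        thus "a \<le> p x"
        proof cases
          case 1 thus ?thesis using e Md by simp
        next
          case 2
          have "((1/t) *\<^sub>R y, (1/t) * b) \<in> M" using Msc[OF e(3)] .
          hence "c \<le> p ((1/t) *\<^sub>R y + w) - (1/t) * b" by (rule c2)
          also have "(1/t) *\<^sub>R y + w = (1/t) *\<^sub>R (y + t *\<^sub>R w)" using 2 by (simp add: algebra_simps)
          also have "p \<dots> = (1/t) * p (y + t *\<^sub>R w)" using 2 by (intro hom) simp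
          finally have "t * c \<le> t * ((1/t) * p (y + t *\<^sub>R w) - (1/t) * b)"
            using 2 by (intro mult_left_mono) auto
          moreover have "t * ((1/t) * p (y + t *\<^sub>R w) - (1/t) * b) = p (y + t *\<^sub>R w) - b"
            using 2 by (simp add: field_simps)
          ultimately show ?thesis using e by (simp add: algebra_simps)
        next
          case 3
          define s where "s = - t"
          have s: "s > 0" using 3 by (simp add: s_def)
          have "((1/s) *\<^sub>R y, (1/s) * b) \<in> M" using Msc[OF e(3)] .
          hence "(1/s) * b - p ((1/s) *\<^sub>R y - w) \<le> c" by (rule c1)
          moreover have "(1/s) *\<^sub>R y - w = (1/s) *\<^sub>R (y + t *\<^sub>R w)" using s by (simp add: s_def algebra_simps)
          moreover have "p ((1/s) *\<^sub>R (y + t *\<^sub>R w)) = (1/s) * p (y + t *\<^sub>R w)" using s by (intro hom) simp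
          ultimately have "(1/s) * b - (1/s) * p (y + t *\<^sub>R w) \<le> c" by simp
          hence "s * ((1/s) * b - (1/s) * p (y + t *\<^sub>R w)) \<le> s * c" using s by (intro mult_left_mono) auto
          thus ?thesis using s e by (simp add: s_def field_simps)
        qed
      qed
      have "(v, p v) = (v + 0 *\<^sub>R w, p v + 0 * c)" by simp
      thus "(v, p v) \<in> M'" unfolding M'_def using Mv by blast
    qed
    moreover have "M \<subseteq> M'"
    proof
      fix q assume q: "q \<in> M"
      obtain y b where yb: "q = (y, b)" by (cases q)
      have "(y, b) = (y + 0 *\<^sub>R w, b + 0 * c)" by simp
      thus "q \<in> M'" unfolding M'_def using q yb by blast
    qed
    moreover have "(w, c) \<in> M'"
    proof -
      have "(w, c) = (0 + 1 *\<^sub>R w, 0 + 1 * c)" by simp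
      thus ?thesis unfolding M'_def using M0 by blast
    qed
    ultimately show False using Mmax nw' by blast
  qed
  define \<phi> where "\<phi> = (\<lambda>x. THE a. (x, a) \<in> M)"
  have \<phi>M: "(x, \<phi> x) \<in> M" for x
  proof -
    obtain a where a: "(x, a) \<in> M" using total by blast
    have "\<phi> x = a" unfolding \<phi>_def using a Mf unfolding functional_def by blast
    thus ?thesis using a by simp
  qed
  have \<phi>u: "(x, a) \<in> M \<Longrightarrow> \<phi> x = a" for x a using \<phi>M[of x] Mf unfolding functional_def by blast
  show ?thesis
  proof (intro exI[of _ \<phi>] conjI allI)
    show "\<phi> (x + y) = \<phi> x + \<phi> y" for x y using \<phi>u[OF Madd[OF \<phi>M \<phi>M]] .
    show "\<phi> (c *\<^sub>R x) = c * \<phi> x" for c x using \<phi>u[OF Msc[OF \<phi>M]] .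
    show "\<phi> x \<le> p x" for x using Md[OF \<phi>M] .
    show "\<phi> v = p v" using \<phi>u[OF Mv] .
  qed
qed


definition plin :: "('b::banach_lattice \<Rightarrow> real) \<Rightarrow> bool" where
  "plin \<phi> \<longleftrightarrow> (\<forall>x y. \<phi> (x + y) = \<phi> x + \<phi> y) \<and> (\<forall>c x. \<phi> (c *\<^sub>R x) = c * \<phi> x)
     \<and> (\<forall>x. 0 \<le> x \<longrightarrow> 0 \<le> \<phi> x)"

lemma plin_add: "plin \<phi> \<Longrightarrow> \<phi> (x + y) = \<phi> x + \<phi> y" unfolding plin_def by blast
lemma plin_scale: "plin \<phi> \<Longrightarrow> \<phi> (c *\<^sub>R x) = c * \<phi> x" unfolding plin_def by blast
lemma plin_pos: "plin \<phi> \<Longrightarrow> 0 \<le> x \<Longrightarrow> 0 \<le> \<phi> x" unfolding plin_def by blast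
lemma plin_diff: "plin \<phi> \<Longrightarrow> \<phi> (x - y) = \<phi> x - \<phi> y"
  using plin_add[of \<phi> "x - y" y] by simp
lemma plin_zero: "plin \<phi> \<Longrightarrow> \<phi> 0 = 0"
  using plin_scale[of \<phi> 0 0] by simp
lemma plin_mono: "plin \<phi> \<Longrightarrow> x \<le> y \<Longrightarrow> \<phi> x \<le> \<phi> y"
  using plin_pos[of \<phi> "y - x"] plin_diff[of \<phi> y x] by simp

definition cmpnt :: "('b::banach_lattice \<Rightarrow> real) \<Rightarrow> 'b \<Rightarrow> 'b \<Rightarrow> real" where
  "cmpnt \<phi> v z = Sup {\<phi> (inf z (t *\<^sub>R v)) | t. 0 \<le> t}"

context
  fixes \<phi> :: "'b::banach_lattice \<Rightarrow> real" and v :: 'b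
  assumes pl: "plin \<phi>" and v0: "0 \<le> v"
begin

lemma comp_bdd: "bdd_above {\<phi> (inf z (t *\<^sub>R v)) | t. 0 \<le> t}"
  by (rule bdd_aboveI[where M = "\<phi> z"]) (auto intro: plin_mono[OF pl])

lemma comp_ne: "{\<phi> (inf z (t *\<^sub>R v)) | t. 0 \<le> t} \<noteq> {}" by auto

lemma comp_ge: "0 \<le> t \<Longrightarrow> \<phi> (inf z (t *\<^sub>R v)) \<le> cmpnt \<phi> v z"
  unfolding cmpnt_def by (rule cSup_upper) (use comp_bdd in auto)

lemma comp_le: "cmpnt \<phi> v z \<le> \<phi> z"
  unfolding cmpnt_def by (rule cSup_least[OF comp_ne]) (auto intro: plin_mono[OF pl])

lemma comp_nonneg: "0 \<le> z \<Longrightarrow> 0 \<le> cmpnt \<phi> v z"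
  using comp_ge[of 0 z] plin_zero[OF pl] by (simp add: inf_absorb2)

lemma comp_mono: "0 \<le> z \<Longrightarrow> z \<le> z' \<Longrightarrow> cmpnt \<phi> v z \<le> cmpnt \<phi> v z'"
  unfolding cmpnt_def[of \<phi> v z]
proof (rule cSup_least[OF comp_ne])
  fix r assume "z \<le> z'" "r \<in> {\<phi> (inf z (t *\<^sub>R v)) |t. 0 \<le> t}"
  then obtain t where t: "0 \<le> t" "r = \<phi> (inf z (t *\<^sub>R v))" by blast
  have "r \<le> \<phi> (inf z' (t *\<^sub>R v))" using t \<open>z \<le> z'\<close> by (auto intro!: plin_mono[OF pl] inf_mono)
  also have "\<dots> \<le> cmpnt \<phi> v z'" by (rule comp_ge[OF t(1)])
  finally show "r \<le> cmpnt \<phi> v z'" .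
qed

lemma comp_subadd:
  assumes "0 \<le> z" "0 \<le> z'"
  shows "cmpnt \<phi> v (z + z') \<le> cmpnt \<phi> v z + cmpnt \<phi> v z'"
  unfolding cmpnt_def[of \<phi> v "z + z'"]
proof (rule cSup_least[OF comp_ne])
  fix r assume "r \<in> {\<phi> (inf (z + z') (t *\<^sub>R v)) |t. 0 \<le> t}"
  then obtain t where t: "0 \<le> t" "r = \<phi> (inf (z + z') (t *\<^sub>R v))" by blast
  have tv: "0 \<le> t *\<^sub>R v" using t v0 by (simp add: scaleR_nonneg_bl)
  have "r \<le> \<phi> (inf z (t *\<^sub>R v) + inf z' (t *\<^sub>R v))"
    unfolding t(2) using assms tv by (intro plin_mono[OF pl] inf_add_le_bl)
  also have "\<dots> = \<phi> (inf z (t *\<^sub>R v)) + \<phi> (inf z' (t *\<^sub>R v))" by (rule plin_add[OF pl])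
  also have "\<dots> \<le> cmpnt \<phi> v z + cmpnt \<phi> v z'" using comp_ge[OF t(1)] by (intro add_mono)
  finally show "r \<le> cmpnt \<phi> v z + cmpnt \<phi> v z'" .
qed

lemma comp_superadd:
  assumes "0 \<le> z" "0 \<le> z'"
  shows "cmpnt \<phi> v z + cmpnt \<phi> v z' \<le> cmpnt \<phi> v (z + z')"
proof -
  have "\<phi> (inf z (t *\<^sub>R v)) + \<phi> (inf z' (s *\<^sub>R v)) \<le> cmpnt \<phi> v (z + z')" if "0 \<le> t" "0 \<le> s" for t s
  proof -
    have "inf z (t *\<^sub>R v) + inf z' (s *\<^sub>R v) \<le> inf (z + z') ((t + s) *\<^sub>R v)"
      by (auto simp: scaleR_add_left intro: add_mono)
    hence "\<phi> (inf z (t *\<^sub>R v)) + \<phi> (inf z' (s *\<^sub>R v)) \<le> \<phi> (inf (z + z') ((t + s) *\<^sub>R v))"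
      using plin_mono[OF pl] plin_add[OF pl] by metis
    also have "\<dots> \<le> cmpnt \<phi> v (z + z')" using that by (intro comp_ge) simp
    finally show ?thesis .
  qed
  hence "\<phi> (inf z (t *\<^sub>R v)) \<le> cmpnt \<phi> v (z + z') - cmpnt \<phi> v z'" if "0 \<le> t" for t
  proof -
    have "cmpnt \<phi> v z' \<le> cmpnt \<phi> v (z + z') - \<phi> (inf z (t *\<^sub>R v))"
      unfolding cmpnt_def[of \<phi> v z']
    proof (rule cSup_least[OF comp_ne])
      fix r assume "r \<in> {\<phi> (inf z' (s *\<^sub>R v)) |s. 0 \<le> s}"
      then obtain s where "0 \<le> s" "r = \<phi> (inf z' (s *\<^sub>R v))" by blast
      thus "r \<le> cmpnt \<phi> v (z + z') - \<phi> (inf z (t *\<^sub>R v))"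
        using \<open>\<And>t s. 0 \<le> t \<Longrightarrow> 0 \<le> s \<Longrightarrow> _\<close>[OF that, of s] by simp
    qed
    thus ?thesis by simp
  qed
  hence "cmpnt \<phi> v z \<le> cmpnt \<phi> v (z + z') - cmpnt \<phi> v z'"
    unfolding cmpnt_def[of \<phi> v z] by (intro cSup_least[OF comp_ne]) blast
  thus ?thesis by simp
qed

lemma comp_hom_le:
  assumes "0 < c" shows "cmpnt \<phi> v (c *\<^sub>R z) \<le> c * cmpnt \<phi> v z"
  unfolding cmpnt_def[of \<phi> v "c *\<^sub>R z"]
proof (rule cSup_least[OF comp_ne])
  fix r assume "r \<in> {\<phi> (inf (c *\<^sub>R z) (t *\<^sub>R v)) |t. 0 \<le> t}"
  then obtain t where t: "0 \<le> t" "r = \<phi> (inf (c *\<^sub>R z) (t *\<^sub>R v))" by blast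
  have "inf (c *\<^sub>R z) (t *\<^sub>R v) = c *\<^sub>R inf z ((t / c) *\<^sub>R v)"
    using assms scaleR_inf_bl[of c z "(t / c) *\<^sub>R v"] by simp
  hence "r = c * \<phi> (inf z ((t / c) *\<^sub>R v))" using t(2) plin_scale[OF pl] by simp
  also have "\<dots> \<le> c * cmpnt \<phi> v z" using assms t(1) by (intro mult_left_mono comp_ge) auto
  finally show "r \<le> c * cmpnt \<phi> v z" .
qed

lemma comp_hom:
  assumes "0 \<le> c" "0 \<le> z" shows "cmpnt \<phi> v (c *\<^sub>R z) = c * cmpnt \<phi> v z"
proof (cases "c = 0")
  case True
  have "cmpnt \<phi> v 0 \<le> \<phi> 0" by (rule comp_le)
  moreover have "0 \<le> cmpnt \<phi> v 0" by (rule comp_nonneg) simp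
  ultimately show ?thesis using True plin_zero[OF pl] by simp
next
  case False
  hence c: "0 < c" using assms by simp
  have "cmpnt \<phi> v z = cmpnt \<phi> v ((1/c) *\<^sub>R (c *\<^sub>R z))" using c by simp
  also have "\<dots> \<le> (1/c) * cmpnt \<phi> v (c *\<^sub>R z)" using c by (intro comp_hom_le) simp
  finally have "c * cmpnt \<phi> v z \<le> cmpnt \<phi> v (c *\<^sub>R z)" using c by (simp add: field_simps)
  thus ?thesis using comp_hom_le[OF c, of z] by simp
qed

lemma comp_disj:
  assumes "0 \<le> w" "inf w v = 0" shows "cmpnt \<phi> v w = 0"
proof -
  have "\<phi> (inf w (t *\<^sub>R v)) = 0" if "0 \<le> t" for t
  proof -
    have "inf (1 *\<^sub>R w) (t *\<^sub>R v) = 0" using assms v0 that by (intro disj_scale) auto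
    thus ?thesis using plin_zero[OF pl] by simp
  qed
  hence "cmpnt \<phi> v w \<le> 0" unfolding cmpnt_def by (intro cSup_least[OF comp_ne]) auto
  thus ?thesis using comp_nonneg[OF assms(1)] by simp
qed

lemma comp_approx:
  assumes "0 < d" shows "\<exists>t\<ge>0. cmpnt \<phi> v z - d < \<phi> (inf z (t *\<^sub>R v))"
proof -
  have "cmpnt \<phi> v z - d < Sup {\<phi> (inf z (t *\<^sub>R v)) | t. 0 \<le> t}" using assms by (simp add: cmpnt_def)
  then obtain r where "r \<in> {\<phi> (inf z (t *\<^sub>R v)) | t. 0 \<le> t}" "cmpnt \<phi> v z - d < r"
    using less_cSup_iff[OF comp_ne comp_bdd] by blast
  thus ?thesis by blast
qed

lemma comp_self: "\<phi> v \<le> cmpnt \<phi> v v"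
  using comp_ge[of 1 v] by simp

end


lemma pprt_add_le: "pprt ((x::'b::banach_lattice) + y) \<le> pprt x + pprt y"
  unfolding pprt_def by (auto intro: add_mono add_nonneg_nonneg)

lemma pprt_scale: "0 \<le> c \<Longrightarrow> pprt (c *\<^sub>R (x::'b::banach_lattice)) = c *\<^sub>R pprt x"
  unfolding pprt_def using scaleR_sup_bl[of c x 0] by simp

lemma norm_pprt_le: "norm (pprt (x::'b::banach_lattice)) \<le> norm x"
proof (rule norm_abs_le_bl)
  have "pprt x \<le> lat_abs x" unfolding pprt_def using lat_abs_nonneg[of x]
    unfolding lat_abs_def by (auto intro: le_supI1)
  thus "lat_abs (pprt x) \<le> lat_abs x" by (simp add: lat_abs_pos)
qed

lemma pos_norming:
  fixes v :: "'b::banach_lattice"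
  assumes "0 \<le> v"
  shows "\<exists>\<phi>. plin \<phi> \<and> (\<forall>x. \<phi> x \<le> norm x) \<and> \<phi> v = norm v"
proof -
  let ?p = "\<lambda>x::'b. norm (pprt x)"
  have sub: "?p (x + y) \<le> ?p x + ?p y" for x y
    using pprt_add_le[of x y] by (intro norm_add_le_pos) auto
  have hom: "?p (c *\<^sub>R x) = c * ?p x" if "0 \<le> c" for c x
    using that by (simp add: pprt_scale)
  obtain \<phi> where \<phi>: "\<forall>x y. \<phi> (x + y) = \<phi> x + \<phi> y" "\<forall>c x. \<phi> (c *\<^sub>R x) = c * \<phi> x"
    "\<forall>x. \<phi> x \<le> ?p x" "\<phi> v = ?p v"
    using hahn_banach[of ?p v, OF sub hom] by blast
  have pos: "0 \<le> \<phi> x" if "0 \<le> x" for x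
  proof -
    have "\<phi> (- x) \<le> norm (pprt (- x))" using \<phi>(3) by blast
    also have "pprt (- x) = 0" using that by simp
    finally have "\<phi> (- x) \<le> 0" by simp
    moreover have "\<phi> (- x) = - \<phi> x" using \<phi>(2)[rule_format, of "-1" x] by simp
    ultimately show ?thesis by simp
  qed
  show ?thesis
  proof (intro exI[of _ \<phi>] conjI allI)
    show "plin \<phi>" unfolding plin_def using \<phi> pos by blast
    show "\<phi> x \<le> norm x" for x using \<phi>(3) norm_pprt_le[of x] order.trans by blast
    show "\<phi> v = norm v" using \<phi>(4) assms by simp
  qed
qed

lemma build_functional:
  fixes u w :: "'b::banach_lattice"
  assumes u0: "0 \<le> u" and uw: "u \<le> lat_abs w"
  shows "\<exists>\<Phi> \<phi> v. bounded_linear \<Phi> \<and> (\<forall>x. \<bar>\<Phi> x\<bar> \<le> norm x) \<and> norm u / 2 \<le> \<bar>\<Phi> w\<bar>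
     \<and> 0 \<le> v \<and> v \<le> u \<and> plin \<phi> \<and> (\<forall>y. 0 \<le> y \<longrightarrow> dual_abs (Blinfun \<Phi>) y \<le> cmpnt \<phi> v y)"
proof -
  define vp where "vp = inf u (pprt w)"
  define vm where "vm = inf u (pprt (- w))"
  have "inf (pprt w + pprt (- w)) u \<le> inf (pprt w) u + inf (pprt (- w)) u"
    by (rule inf_add_le_bl) (use u0 in auto)
  moreover have "inf (pprt w + pprt (- w)) u = u" using uw by (simp add: pprt_plus_pprt_neg inf_absorb2)
  moreover have "inf (pprt w) u = vp" "inf (pprt (- w)) u = vm" unfolding vp_def vm_def by (simp_all add: inf_commute)
  ultimately have "u \<le> vp + vm" by simp
  hence nu: "norm u \<le> norm vp + norm vm" using u0 by (intro norm_add_le_pos)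
  have "\<exists>s::real. (s = 1 \<or> s = -1) \<and> norm u / 2 \<le> norm (inf u (pprt (s *\<^sub>R w)))"
  proof (cases "norm u / 2 \<le> norm vp")
    case True
    hence "norm u / 2 \<le> norm (inf u (pprt ((1::real) *\<^sub>R w)))" unfolding vp_def by simp
    thus ?thesis by blast
  next
    case False
    hence "norm u / 2 \<le> norm vm" using nu by linarith
    hence "norm u / 2 \<le> norm (inf u (pprt ((-1::real) *\<^sub>R w)))" unfolding vm_def by simp
    thus ?thesis by blast
  qed
  then obtain s :: real where s: "s = 1 \<or> s = -1" "norm u / 2 \<le> norm (inf u (pprt (s *\<^sub>R w)))" by blast
  define w' where "w' = s *\<^sub>R w"
  define v where "v = inf u (pprt w')"
  have v0: "0 \<le> v" unfolding v_def using u0 by simp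
  have vu: "v \<le> u" unfolding v_def by simp
  have vw: "v \<le> pprt w'" unfolding v_def by simp
  have vd: "inf v (pprt (- w')) = 0"
    by (rule disj_below[OF v0 vw _ order.refl inf_pprt_pprt_neg]) simp
  obtain \<phi> where \<phi>: "plin \<phi>" "\<And>x. \<phi> x \<le> norm x" "\<phi> v = norm v"
    using pos_norming[OF v0] by blast
  let ?q = "\<lambda>x. cmpnt \<phi> v (pprt x)"
  have sub: "?q (x + y) \<le> ?q x + ?q y" for x y
  proof -
    have "?q (x + y) \<le> cmpnt \<phi> v (pprt x + pprt y)"
      using comp_mono[OF \<phi>(1) v0] pprt_add_le[of x y] by simp
    also have "\<dots> \<le> ?q x + ?q y" by (rule comp_subadd[OF \<phi>(1) v0]) auto
    finally show ?thesis .
  qed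
  have hom: "?q (c *\<^sub>R x) = c * ?q x" if "0 \<le> c" for c x
    using that comp_hom[OF \<phi>(1) v0, of c "pprt x"] by (simp add: pprt_scale)
  obtain \<Phi> where \<Phi>: "\<forall>x y. \<Phi> (x + y) = \<Phi> x + \<Phi> y" "\<forall>c x. \<Phi> (c *\<^sub>R x) = c * \<Phi> x"
    "\<forall>x. \<Phi> x \<le> ?q x" "\<Phi> v = ?q v"
    using hahn_banach[of ?q v, OF sub hom] by blast
  have qle: "?q x \<le> norm x" for x
    using comp_le[OF \<phi>(1) v0, of "pprt x"] \<phi>(2)[of "pprt x"] norm_pprt_le[of x] by linarith
  have Phineg: "\<Phi> (- x) = - \<Phi> x" for x using \<Phi>(2)[rule_format, of "-1" x] by simp
  have Pabs: "\<bar>\<Phi> x\<bar> \<le> norm x" for x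
    using \<Phi>(3)[rule_format, of x] \<Phi>(3)[rule_format, of "- x"] qle[of x] qle[of "- x"] Phineg[of x]
    by (simp add: abs_le_iff)
  have bl: "bounded_linear \<Phi>"
    by (rule bounded_linear_intro[where K = 1]) (use \<Phi> Pabs in auto)
  have BP: "blinfun_apply (Blinfun \<Phi>) = \<Phi>" using bl by (rule bounded_linear_Blinfun_apply)
  have Pmono: "\<Phi> x \<le> \<Phi> y" if "x \<le> y" for x y
  proof -
    have "\<Phi> (x - y) \<le> ?q (x - y)" using \<Phi>(3) by blast
    also have "pprt (x - y) = 0" using that by simp
    also have "cmpnt \<phi> v 0 = 0"
      using comp_le[OF \<phi>(1) v0, of 0] comp_nonneg[OF \<phi>(1) v0, of 0] plin_zero[OF \<phi>(1)] by simp
    finally have "\<Phi> (x - y) \<le> 0" .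
    moreover have "\<Phi> (x - y) = \<Phi> x - \<Phi> y" using \<Phi>(1)[rule_format, of "x - y" y] by simp
    ultimately show ?thesis by simp
  qed
  have "\<Phi> w' = \<Phi> (pprt w' + - pprt (- w'))" using prts_bl[of w'] by simp
  also have "\<dots> = \<Phi> (pprt w') + \<Phi> (- pprt (- w'))" using \<Phi>(1) by blast
  also have "\<dots> = \<Phi> (pprt w') - \<Phi> (pprt (- w'))" using Phineg[of "pprt (- w')"] by simp
  finally have "\<Phi> w' = \<Phi> (pprt w') - \<Phi> (pprt (- w'))" .
  moreover have "\<Phi> (pprt (- w')) \<le> 0"
  proof -
    have "\<Phi> (pprt (- w')) \<le> cmpnt \<phi> v (pprt (pprt (- w')))" using \<Phi>(3) by blast
    also have "\<dots> = cmpnt \<phi> v (pprt (- w'))" by simp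
    also have "\<dots> = 0" using comp_disj[OF \<phi>(1) v0, of "pprt (- w')"] vd by (simp add: inf_commute)
    finally show ?thesis .
  qed
  moreover have "norm v \<le> \<Phi> (pprt w')"
  proof -
    have "norm v = \<phi> v" using \<phi>(3) by simp
    also have "\<dots> \<le> cmpnt \<phi> v v" by (rule comp_self[OF \<phi>(1) v0])
    also have "\<dots> = \<Phi> v" using \<Phi>(4) v0 by simp
    also have "\<dots> \<le> \<Phi> (pprt w')" using vw by (rule Pmono)
    finally show ?thesis .
  qed
  ultimately have "norm v \<le> \<Phi> w'" by simp
  moreover have "\<Phi> w' = s * \<Phi> w" unfolding w'_def using \<Phi>(2) by blast
  ultimately have "norm u / 2 \<le> \<bar>\<Phi> w\<bar>" using s unfolding v_def w'_def by auto
  moreover have "dual_abs (Blinfun \<Phi>) y \<le> cmpnt \<phi> v y" if "0 \<le> y" for y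
    unfolding dual_abs_def BP
  proof (rule cSup_least)
    show "{\<Phi> z |z. - y \<le> z \<and> z \<le> y} \<noteq> {}" using that by (auto intro!: exI[of _ 0])
    fix r assume "r \<in> {\<Phi> z |z. - y \<le> z \<and> z \<le> y}"
    then obtain z where z: "r = \<Phi> z" "- y \<le> z" "z \<le> y" by blast
    have "r \<le> cmpnt \<phi> v (pprt z)" using z(1) \<Phi>(3) by blast
    also have "\<dots> \<le> cmpnt \<phi> v y"
    proof (rule comp_mono[OF \<phi>(1) v0])
      show "0 \<le> pprt z" by simp
      show "pprt z \<le> y" using z(3) that unfolding pprt_def by simp
    qed
    finally show "r \<le> cmpnt \<phi> v y" .
  qed
  ultimately show ?thesis using bl Pabs v0 vu \<phi>(1) by blast
qed


lemma comp_disjoint: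
  fixes F1 F2 :: "'b::banach_lattice \<Rightarrow>\<^sub>L real"
  assumes p1: "plin \<phi>1" and p2: "plin \<phi>2" and v1: "0 \<le> v1" and v2: "0 \<le> v2"
    and vd: "inf v1 v2 = 0"
    and d1: "\<And>y. 0 \<le> y \<Longrightarrow> dual_abs F1 y \<le> cmpnt \<phi>1 v1 y"
    and d2: "\<And>y. 0 \<le> y \<Longrightarrow> dual_abs F2 y \<le> cmpnt \<phi>2 v2 y"
  shows "dual_disjoint F1 F2"
  unfolding dual_disjoint_def
proof (intro allI impI)
  fix x :: 'b assume x0: "0 \<le> x"
  let ?S = "{dual_abs F1 y + dual_abs F2 (x - y) | y. 0 \<le> y \<and> y \<le> x}"
  have Sne: "?S \<noteq> {}" using x0 by blast
  have Sge: "0 \<le> r" if rS: "r \<in> ?S" for r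
  proof -
    obtain y where y: "r = dual_abs F1 y + dual_abs F2 (x - y)" "0 \<le> y" "y \<le> x" using rS by blast
    have "0 \<le> dual_abs F1 y" using y(2) by (rule da_nonneg)
    moreover have "0 \<le> dual_abs F2 (x - y)" using y(3) by (intro da_nonneg) simp
    ultimately show ?thesis using y(1) by simp
  qed
  have small: "\<exists>r\<in>?S. r < d" if d0: "0 < d" for d
  proof -
    obtain t where t: "0 \<le> t" "cmpnt \<phi>2 v2 x - d < \<phi>2 (inf x (t *\<^sub>R v2))"
      using comp_approx[OF p2 v2 d0] by blast
    define y where "y = inf x (t *\<^sub>R v2)"
    have y0: "0 \<le> y" unfolding y_def using x0 t v2 by (simp add: scaleR_nonneg_bl)
    have yx: "y \<le> x" unfolding y_def by simp
    have ytv: "y \<le> t *\<^sub>R v2" unfolding y_def by simp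
    have "inf (1 *\<^sub>R v2) (t *\<^sub>R v1) = 0" using v1 v2 vd t(1) by (intro disj_scale) (auto simp: inf_commute)
    hence "inf y v1 = 0"
      using disj_below[OF y0 ytv v1 order.refl, of] v1 v2 t(1) vd disj_scale[OF v2 v1 _ t(1), of 1]
      by (simp add: inf_commute scaleR_nonneg_bl)
    hence c1: "cmpnt \<phi>1 v1 y = 0" by (rule comp_disj[OF p1 v1 y0])
    have "cmpnt \<phi>2 v2 (x - y) + cmpnt \<phi>2 v2 y \<le> cmpnt \<phi>2 v2 (x - y + y)"
      using yx y0 by (intro comp_superadd[OF p2 v2]) auto
    hence c2: "cmpnt \<phi>2 v2 (x - y) \<le> cmpnt \<phi>2 v2 x - cmpnt \<phi>2 v2 y" by simp
    have "\<phi>2 y \<le> cmpnt \<phi>2 v2 y"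
      using comp_ge[OF p2 v2 t(1), of y] ytv by (simp add: inf_absorb1)
    have "dual_abs F1 y + dual_abs F2 (x - y) \<le> cmpnt \<phi>1 v1 y + cmpnt \<phi>2 v2 (x - y)"
      using d1[OF y0] d2[of "x - y"] yx by simp
    also have "\<dots> < d" using c1 c2 t(2) \<open>\<phi>2 y \<le> cmpnt \<phi>2 v2 y\<close> unfolding y_def by simp
    finally show ?thesis using y0 yx by blast
  qed
  have "0 \<le> Inf ?S" using Sne Sge by (intro cInf_greatest) auto
  moreover have "Inf ?S \<le> 0"
  proof (rule ccontr)
    assume "\<not> Inf ?S \<le> 0"
    hence "0 < Inf ?S" by simp
    then obtain r where r: "r \<in> ?S" "r < Inf ?S" using small by blast
    have "bdd_below ?S" by (rule bdd_belowI[where m = 0]) (rule Sge)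
    hence "Inf ?S \<le> r" using r(1) by (rule cInf_lower[rotated])
    thus False using r(2) by simp
  qed
  ultimately show "Inf ?S = 0" by simp
qed


lemma backward_dir:
  fixes T :: "'a::banach \<Rightarrow> 'b::banach_lattice"
  assumes T: "bounded_linear T"
    and H: "\<forall>f :: nat \<Rightarrow> ('b \<Rightarrow>\<^sub>L real).
       bounded (range f) \<and> (\<forall>n m. n \<noteq> m \<longrightarrow> dual_disjoint (f n) (f m)) \<longrightarrow>
       (\<forall>x. (\<lambda>n. blinfun_apply (f n) (T x)) \<longlonglongrightarrow> 0)"
    and A: "limited_set A"
  shows "Lwc_set (T ` A)"
  unfolding Lwc_set_def
proof (intro allI impI)
  fix x :: "nat \<Rightarrow> 'b" assume a: "(\<forall>n. x n \<in> sol (T ` A)) \<and> disjoint_seq x"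
  show "(\<lambda>n. norm (x n)) \<longlonglongrightarrow> 0"
  proof (rule ccontr)
    assume nt: "\<not> (\<lambda>n. norm (x n)) \<longlonglongrightarrow> 0"
    have "\<exists>r>0. \<forall>no. \<exists>n\<ge>no. r \<le> norm (x n)"
    proof (rule ccontr)
      assume "\<not> ?thesis"
      hence "\<forall>r>0. \<exists>no. \<forall>n\<ge>no. norm (x n) < r" by (meson not_le)
      hence "\<forall>r>0. \<exists>no. \<forall>n\<ge>no. norm (norm (x n) - 0) < r" by simp
      hence "(\<lambda>n. norm (x n)) \<longlonglongrightarrow> 0" by (simp only: LIMSEQ_iff)
      with nt show False by simp
    qed
    then obtain r where r: "r > 0" "\<And>no. \<exists>n\<ge>no. r \<le> norm (x n)" by blast
    define L where "L = {n. r \<le> norm (x n)}"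
    have infL: "infinite L" unfolding infinite_nat_iff_unbounded_le L_def using r(2) by blast
    define \<sigma> where "\<sigma> = enumerate L"
    have \<sigma>L: "\<sigma> i \<in> L" for i unfolding \<sigma>_def using infL by (rule enumerate_in_set)
    have \<sigma>inj: "inj \<sigma>" unfolding \<sigma>_def using infL
      by (intro strict_mono_imp_inj_on) (simp add: strict_mono_def enumerate_mono)
    have "\<forall>i. \<exists>b. b \<in> A \<and> lat_abs (x (\<sigma> i)) \<le> lat_abs (T b)"
    proof
      fix i
      have "x (\<sigma> i) \<in> sol (T ` A)" using a by blast
      thus "\<exists>b. b \<in> A \<and> lat_abs (x (\<sigma> i)) \<le> lat_abs (T b)" unfolding sol_def by blast
    qed
    from choice[OF this] obtain aa where aa: "\<And>i. aa i \<in> A" "\<And>i. lat_abs (x (\<sigma> i)) \<le> lat_abs (T (aa i))"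
      by blast
    define u where "u = (\<lambda>i. lat_abs (x (\<sigma> i)))"
    define P where "P = (\<lambda>i \<Phi> \<phi> v. bounded_linear \<Phi> \<and> (\<forall>z. \<bar>\<Phi> z\<bar> \<le> norm z) \<and> norm (u i) / 2 \<le> \<bar>\<Phi> (T (aa i))\<bar>
       \<and> 0 \<le> v \<and> v \<le> u i \<and> plin \<phi> \<and> (\<forall>y. 0 \<le> y \<longrightarrow> dual_abs (Blinfun \<Phi>) y \<le> cmpnt \<phi> v y))"
    have "\<forall>i. \<exists>\<Phi>. \<exists>\<phi> v. P i \<Phi> \<phi> v"
    proof
      fix i
      show "\<exists>\<Phi>. \<exists>\<phi> v. P i \<Phi> \<phi> v" unfolding P_def
        by (rule build_functional) (use aa(2)[of i] lat_abs_nonneg in \<open>auto simp: u_def\<close>)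
    qed
    from choice[OF this] obtain Ph where "\<forall>i. \<exists>\<phi> v. P i (Ph i) \<phi> v" by blast
    from choice[OF this] obtain ph where "\<forall>i. \<exists>v. P i (Ph i) (ph i) v" by blast
    from choice[OF this] obtain vv where PP: "\<And>i. P i (Ph i) (ph i) (vv i)" by blast
    define F where "F = (\<lambda>i. Blinfun (Ph i))"
    have bl: "bounded_linear (Ph i)" for i using PP[of i] unfolding P_def by blast
    have FP: "blinfun_apply (F i) = Ph i" for i unfolding F_def using bl by (rule bounded_linear_Blinfun_apply)
    have Fn: "norm (F i) \<le> 1" for i
    proof (rule norm_blinfun_bound)
      show "0 \<le> (1::real)" by simp
      fix z show "norm (blinfun_apply (F i) z) \<le> 1 * norm z" using PP[of i] unfolding P_def FP by simp
    qed
    have Fb: "bounded (range F)" unfolding bounded_iff using Fn by blast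
    have Fd: "\<forall>n m. n \<noteq> m \<longrightarrow> dual_disjoint (F n) (F m)"
    proof (intro allI impI)
      fix n m :: nat assume nm: "n \<noteq> m"
      have "\<sigma> n \<noteq> \<sigma> m" using nm \<sigma>inj by (auto dest: injD)
      hence ud: "inf (u n) (u m) = 0" using a unfolding disjoint_seq_def u_def by blast
      have pn: "plin (ph n)" "0 \<le> vv n" "vv n \<le> u n"
        "\<And>y. 0 \<le> y \<Longrightarrow> dual_abs (F n) y \<le> cmpnt (ph n) (vv n) y"
        using PP[of n] unfolding P_def F_def by auto
      have pm: "plin (ph m)" "0 \<le> vv m" "vv m \<le> u m"
        "\<And>y. 0 \<le> y \<Longrightarrow> dual_abs (F m) y \<le> cmpnt (ph m) (vv m) y"
        using PP[of m] unfolding P_def F_def by auto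
      have "inf (vv n) (vv m) = 0" by (rule disj_below[OF pn(2,3) pm(2,3) ud])
      thus "dual_disjoint (F n) (F m)"
        by (rule comp_disjoint[OF pn(1) pm(1) pn(2) pm(2) _ pn(4) pm(4)])
    qed
    have "\<forall>z. (\<lambda>n. blinfun_apply (F n) (T z)) \<longlonglongrightarrow> 0"
      using H[rule_format, OF conjI[OF Fb Fd]] by blast
    hence wn: "\<forall>z. (\<lambda>n. Ph n (T z)) \<longlonglongrightarrow> 0" by (simp add: FP)
    define G where "G = (\<lambda>i. Blinfun (\<lambda>z. Ph i (T z)))"
    have GP: "blinfun_apply (G i) = (\<lambda>z. Ph i (T z))" for i
      unfolding G_def using bounded_linear_compose[OF bl T] by (rule bounded_linear_Blinfun_apply)
    have "\<forall>z. (\<lambda>n. blinfun_apply (G n) z) \<longlonglongrightarrow> 0" unfolding GP using wn by blast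
    hence "\<forall>e>0. \<forall>\<^sub>F n in sequentially. \<forall>b\<in>A. \<bar>blinfun_apply (G n) b\<bar> < e"
      using A unfolding limited_set_def by blast
    moreover have "0 < r / 2" using r(1) by simp
    ultimately have "\<forall>\<^sub>F n in sequentially. \<forall>b\<in>A. \<bar>blinfun_apply (G n) b\<bar> < r / 2" by blast
    then obtain N where "\<forall>n\<ge>N. \<forall>b\<in>A. \<bar>blinfun_apply (G n) b\<bar> < r / 2"
      unfolding eventually_sequentially by blast
    hence lt: "\<bar>Ph N (T (aa N))\<bar> < r / 2" using aa(1)[of N] unfolding GP by simp
    have "norm (u N) / 2 \<le> \<bar>Ph N (T (aa N))\<bar>" using PP[of N] unfolding P_def by blast
    moreover have "norm (u N) = norm (x (\<sigma> N))" unfolding u_def by (rule norm_lat_abs)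
    moreover have "r \<le> norm (x (\<sigma> N))" using \<sigma>L[of N] unfolding L_def by simp
    ultimately show False using lt by simp
  qed
qed

theorem theorem2p8:
  fixes T :: "'a::banach \<Rightarrow> 'b::banach_lattice"
  assumes "bounded_linear T"
  shows "limitedly_LWC T \<longleftrightarrow>
    (\<forall>f :: nat \<Rightarrow> ('b \<Rightarrow>\<^sub>L real).
       bounded (range f) \<and> (\<forall>n m. n \<noteq> m \<longrightarrow> dual_disjoint (f n) (f m)) \<longrightarrow>
       (\<forall>x. (\<lambda>n. blinfun_apply (f n) (T x)) \<longlonglongrightarrow> 0))"
proof
  assume "limitedly_LWC T"
  thus "\<forall>f :: nat \<Rightarrow> ('b \<Rightarrow>\<^sub>L real).
       bounded (range f) \<and> (\<forall>n m. n \<noteq> m \<longrightarrow> dual_disjoint (f n) (f m)) \<longrightarrow>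
       (\<forall>x. (\<lambda>n. blinfun_apply (f n) (T x)) \<longlonglongrightarrow> 0)"
    using forward_dir[of T] by blast
next
  assume H: "\<forall>f :: nat \<Rightarrow> ('b \<Rightarrow>\<^sub>L real).
       bounded (range f) \<and> (\<forall>n m. n \<noteq> m \<longrightarrow> dual_disjoint (f n) (f m)) \<longrightarrow>
       (\<forall>x. (\<lambda>n. blinfun_apply (f n) (T x)) \<longlonglongrightarrow> 0)"
  show "limitedly_LWC T" unfolding limitedly_LWC_def
    using backward_dir[OF assms H] by blast
qed


end
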